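(* Let $c\in\mathsf{ACirc}[n,m]$ and let $\hat c\in\mathsf{Circ}[n+1,m]$ be obtained as follows: replace $c$ by an equivalent circuit containing exactly one occurrence of $\mathbf 1$ and no occurrence of $\mathbf 1^{op}$, remove this $\mathbf 1$ and replace it by an identity wire extended to the left boundary, creating a new left port. Then $c$ is realisable if and only if this new left port of $\hat c$ (the one to which $\mathbf 1$ was connected) is an input port of $\hat c$.
   Context: Fix a field $k$. Circuits: terms built from generators with sorts $(n,m)$: copier $\Delta:(1,2)$, discard $!:(1,0)$, amplifier $\mathsf{s}_r:(1,1)$ ($r\in k$), register $\mathsf{x}:(1,1)$, adder $+:(2,1)$, zero $0:(0,1)$, one $\mathbf{1}:(0,1)$; mirror images $\Delta^{op}:(2,1)$, $!^{op}:(0,1)$, $\mathsf{s}_r^{op}$, $\mathsf{x}^{op}:(1,1)$, $+^{op}:(1,2)$, $0^{op}:(1,0)$, $\mathbf{1}^{op}:(1,0)$; $\mathrm{id}_0,\mathrm{id}_1,\mathrm{sw}:(2,2)$; closed under $;$ and $\oplus$. $\mathsf{ACirc}$ is the resulting prop; $\mathsf{Circ}$ the sub-prop of circuits without $\mathbf 1,\mathbf 1^{op}$. Denotation over the field $k(x)$ of polynomial fractions: $[\![\Delta]\!]=\{(p,(p,p))\}$, $[\![!]\!]=\{(p,\bullet)\}$, $[\![+]\!]=\{((p,q),p+q)\}$, $[\![0]\!]=\{(\bullet,0)\}$, $[\![\mathbf 1]\!]=\{(\bullet,1)\}$, $[\![\mathsf s_r]\!]=\{(p,rp)\}$, $[\![\mathsf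 x]\!]=\{(p,px)\}$; mirrored generators denote converse relations; structural ones identity, swap, $\{(\bullet,\bullet)\}$; $;$ relational composition, $\oplus$ product. Circuits are equivalent if they have the same denotation (equivalently, equal in the complete theory AIH). Feedback: for $c:(n+1,m+1)$, $\mathrm{Tr}(c):(n,m)$ connects the last right port of $c$ to its last left port through a register $\mathsf x$, bending with cup $\eta=!^{op};\Delta:(0,2)$ and cap $\epsilon=\Delta^{op};!:(2,0)$. $\mathsf{SF}$ (signal flow graphs) is the closure of $\{\Delta,!,\mathsf s_r,\mathsf x,+,0,\mathrm{id}_0,\mathrm{id}_1,\mathrm{sw}\}$ under $;$, $\oplus$, $\mathrm{Tr}$; $\mathsf{ASF}$ (affine signal flow graphs) is the same closure with $\mathbf 1$ added. Rewiring: for $c:(n,m)$ and a partition of its ports into inputs $I$ and outputs $O$, the rewiring is the circuit of sort $(|I|,|O|)$ obtained by bending left ports in $O$ to the right with cups and right ports in $I$ to the left with caps. A port of a circuit $d\in\mathsf{Circ}$ is an input port if there is a partition with that port in $I$ whose rewiring is equivalent to a circuit of $\mathsf{SF}$. A circuit $c\in\mathsf{ACirc}$ is realisable if for some partition its rewiring is equivalent to a circuit of $\mathsf{ASF}$. *)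

theory Defs
  imports "HOL-Computational_Algebra.Polynomial" "HOL-Computational_Algebra.Fraction_Field"
begin

datatype 'k circ =
    CCopy | CDisc | CAmp 'k | CReg | CAdd | CZero | COne
  | CCopyOp | CDiscOp | CAmpOp 'k | CRegOp | CAddOp | CZeroOp | COneOp
  | CId0 | CId1 | CSw
  | CSeq "'k circ" "'k circ"
  | CPar "'k circ" "'k circ"

text \<open>Sort (arity, coarity) of a circuit; None for ill-typed terms.
  ACirc[n,m] = circuits c with csort c = Some (n,m).\<close>
fun csort :: "'k circ \<Rightarrow> (nat \<times> nat) option" where
  "csort CCopy = Some (1,2)"
| "csort CDisc = Some (1,0)"
| "csort (CAmp r) = Some (1,1)"
| "csort CReg = Some (1,1)"
| "csort CAdd = Some (2,1)"
| "csort CZero = Some (0,1)"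
| "csort COne = Some (0,1)"
| "csort CCopyOp = Some (2,1)"
| "csort CDiscOp = Some (0,1)"
| "csort (CAmpOp r) = Some (1,1)"
| "csort CRegOp = Some (1,1)"
| "csort CAddOp = Some (1,2)"
| "csort CZeroOp = Some (1,0)"
| "csort COneOp = Some (1,0)"
| "csort CId0 = Some (0,0)"
| "csort CId1 = Some (1,1)"
| "csort CSw = Some (2,2)"
| "csort (CSeq c d) = (case (csort c, csort d) of
      (Some (a,b), Some (b',e)) \<Rightarrow> (if b = b' then Some (a,e) else None)
    | _ \<Rightarrow> None)"
| "csort (CPar c d) = (case (csort c, csort d) of
      (Some (a,b), Some (a',b')) \<Rightarrow> Some (a + a', b + b')
    | _ \<Rightarrow> None)"

section \<open>Denotation over the field k(x) of polynomial fractions\<close>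

definition xvar :: "'k::field poly fract" where
  "xvar = Fract [:0, 1:] 1"

definition scal :: "'k::field \<Rightarrow> 'k poly fract" where
  "scal r = Fract [:r:] 1"

fun den :: "'k::field circ \<Rightarrow> ('k poly fract list \<times> 'k poly fract list) set" where
  "den CCopy = {([p],[p,p]) | p. True}"
| "den CDisc = {([p],[]) | p. True}"
| "den (CAmp r) = {([p],[scal r * p]) | p. True}"
| "den CReg = {([p],[p * xvar]) | p. True}"
| "den CAdd = {([p,q],[p + q]) | p q. True}"
| "den CZero = {([],[0])}"
| "den COne = {([],[1])}"
| "den CCopyOp = {([p,p],[p]) | p. True}"
| "den CDiscOp = {([],[p]) | p. True}"
| "den (CAmpOp r) = {([scal r * p],[p]) | p. True}"
| "den CRegOp = {([p * xvar],[p]) | p. True}"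
| "den CAddOp = {([p + q],[p,q]) | p q. True}"
| "den CZeroOp = {([0],[])}"
| "den COneOp = {([1],[])}"
| "den CId0 = {([],[])}"
| "den CId1 = {([p],[p]) | p. True}"
| "den CSw = {([p,q],[q,p]) | p q. True}"
| "den (CSeq c d) = den c O den d"
| "den (CPar c d) = {(u1 @ u2, v1 @ v2) | u1 u2 v1 v2. (u1,v1) \<in> den c \<and> (u2,v2) \<in> den d}"

definition circ_equiv :: "'k::field circ \<Rightarrow> 'k circ \<Rightarrow> bool" where
  "circ_equiv c d \<longleftrightarrow> csort c = csort d \<and> csort c \<noteq> None \<and> den c = den d"

fun count_one :: "'k circ \<Rightarrow> nat" where
  "count_one COne = 1"
| "count_one (CSeq c d) = count_one c + count_one d"
| "count_one (CPar c d) = count_one c + count_one d"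
| "count_one _ = 0"

fun count_oneop :: "'k circ \<Rightarrow> nat" where
  "count_oneop COneOp = 1"
| "count_oneop (CSeq c d) = count_oneop c + count_oneop d"
| "count_oneop (CPar c d) = count_oneop c + count_oneop d"
| "count_oneop _ = 0"

definition in_Circ :: "'k circ \<Rightarrow> bool" where
  "in_Circ c \<longleftrightarrow> count_one c = 0 \<and> count_oneop c = 0"

fun idn :: "nat \<Rightarrow> 'k circ" where
  "idn 0 = CId0"
| "idn (Suc n) = CPar (idn n) CId1"

definition swap_at :: "nat \<Rightarrow> nat \<Rightarrow> 'k circ" where
  "swap_at k a = CPar (CPar (idn k) CSw) (idn (a - k - 2))"

text \<open>moveR i d a: permutation of a wires sending input wire i to output wire i+d
  (wires i+1..i+d shift one to the left).\<close>
fun moveR :: "nat \<Rightarrow> nat \<Rightarrow> nat \<Rightarrow> 'k circ" where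
  "moveR i 0 a = idn a"
| "moveR i (Suc d) a = CSeq (swap_at i a) (moveR (Suc i) d a)"

text \<open>moveL i d a: permutation of a wires sending input wire i+d to output wire i.\<close>
fun moveL :: "nat \<Rightarrow> nat \<Rightarrow> nat \<Rightarrow> 'k circ" where
  "moveL i 0 a = idn a"
| "moveL i (Suc d) a = CSeq (moveL (Suc i) d a) (swap_at i a)"

definition cup :: "'k circ" where
  "cup = CSeq CDiscOp CCopy"

definition cap :: "'k circ" where
  "cap = CSeq CCopyOp CDisc"

text \<open>For c : (n+1,m+1), trc n m c : (n,m) connects the last right port of c to its
  last left port through a register.\<close>
definition trc :: "nat \<Rightarrow> nat \<Rightarrow> 'k circ \<Rightarrow> 'k circ" where
  "trc n m c =
     CSeq (CSeq (CSeq (CPar (idn n) cup) (CPar c CId1))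
                (CPar (CPar (idn m) CReg) CId1))
          (CPar (idn m) cap)"

inductive_set sfg :: "bool \<Rightarrow> 'k circ set" for aff :: bool where
  "CCopy \<in> sfg aff"
| "CDisc \<in> sfg aff"
| "CAmp r \<in> sfg aff"
| "CReg \<in> sfg aff"
| "CAdd \<in> sfg aff"
| "CZero \<in> sfg aff"
| "CId0 \<in> sfg aff"
| "CId1 \<in> sfg aff"
| "CSw \<in> sfg aff"
| "aff \<Longrightarrow> COne \<in> sfg aff"
| "c \<in> sfg aff \<Longrightarrow> d \<in> sfg aff \<Longrightarrow> csort c = Some (a,b) \<Longrightarrow> csort d = Some (b,e)
     \<Longrightarrow> CSeq c d \<in> sfg aff"
| "c \<in> sfg aff \<Longrightarrow> d \<in> sfg aff \<Longrightarrow> CPar c d \<in> sfg aff"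
| "c \<in> sfg aff \<Longrightarrow> csort c = Some (Suc n, Suc m) \<Longrightarrow> trc n m c \<in> sfg aff"

abbreviation SF :: "'k circ set" where "SF \<equiv> sfg False"
abbreviation ASF :: "'k circ set" where "ASF \<equiv> sfg True"

text \<open>Bend right port j of c : (a,b) to the left (new last left port): sort (a+1,b-1).\<close>
definition bendR :: "nat \<Rightarrow> nat \<Rightarrow> nat \<Rightarrow> 'k circ \<Rightarrow> 'k circ" where
  "bendR j a b c =
     CSeq (CPar (CSeq c (moveR j (b - 1 - j) b)) CId1) (CPar (idn (b - 1)) cap)"

text \<open>Bend left port i of c : (a,b) to the right (new last right port): sort (a-1,b+1).\<close>
definition bendL :: "nat \<Rightarrow> nat \<Rightarrow> nat \<Rightarrow> 'k circ \<Rightarrow> 'k circ" where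
  "bendL i a b c =
     CSeq (CPar (idn (a - 1)) cup) (CPar (CSeq (moveL i (a - 1 - i) a) c) CId1)"

text \<open>Bend the right ports j < k flagged as inputs (rI ! j) to the left, from the highest down.\<close>
fun rwR :: "'k circ \<Rightarrow> nat \<Rightarrow> nat \<Rightarrow> bool list \<Rightarrow> nat \<Rightarrow> 'k circ" where
  "rwR c a b rI 0 = c"
| "rwR c a b rI (Suc k) =
     (if rI ! k then rwR (bendR k a b c) (Suc a) (b - 1) rI k else rwR c a b rI k)"

text \<open>Bend the left ports i < k flagged as outputs (\<not> lI ! i) to the right, from the highest down.\<close>
fun rwL :: "'k circ \<Rightarrow> nat \<Rightarrow> nat \<Rightarrow> bool list \<Rightarrow> nat \<Rightarrow> 'k circ" where
  "rwL c a b lI 0 = c"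
| "rwL c a b lI (Suc k) =
     (if lI ! k then rwL c a b lI k else rwL (bendL k a b c) (a - 1) (Suc b) lI k)"

text \<open>Rewiring of c : (n,m) w.r.t. the partition in which left port i is an input iff lI ! i
  and right port j is an input iff rI ! j (length lI = n, length rI = m).\<close>
definition rewiring :: "'k circ \<Rightarrow> nat \<Rightarrow> nat \<Rightarrow> bool list \<Rightarrow> bool list \<Rightarrow> 'k circ" where
  "rewiring c n m lI rI =
     (let r = length (filter id rI)
      in rwL (rwR c n m rI m) (n + r) (m - r) lI n)"

datatype port = LeftP nat | RightP nat

definition is_input_port :: "'k::field circ \<Rightarrow> nat \<Rightarrow> nat \<Rightarrow> port \<Rightarrow> bool" where
  "is_input_port d n m p \<longleftrightarrow>
     (\<exists>lI rI. length lI = n \<and> length rI = m \<and>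
        (case p of LeftP i \<Rightarrow> i < n \<and> lI ! i | RightP j \<Rightarrow> j < m \<and> rI ! j) \<and>
        (\<exists>e \<in> SF. circ_equiv (rewiring d n m lI rI) e))"

definition realisable :: "'k::field circ \<Rightarrow> nat \<Rightarrow> nat \<Rightarrow> bool" where
  "realisable c n m \<longleftrightarrow>
     (\<exists>lI rI. length lI = n \<and> length rI = m \<and>
        (\<exists>e \<in> ASF. circ_equiv (rewiring c n m lI rI) e))"

text \<open>For c containing exactly one occurrence of 1, hatc c replaces it by an identity wire
  extended to the left boundary, where it becomes the new first left port (index 0).\<close>
fun hatc :: "'k circ \<Rightarrow> 'k circ" where
  "hatc COne = CId1"
| "hatc (CSeq c d) =
     (if 0 < count_one c then CSeq (hatc c) d else CSeq (CPar CId1 c) (hatc d))"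
| "hatc (CPar c d) =
     (if 0 < count_one c then CPar (hatc c) d
      else (let ka = fst (the (csort c)); kd = fst (the (csort d))
            in CSeq (moveR 0 ka (ka + kd + 1)) (CPar c (hatc d))))"
| "hatc c = c"

end

theory Submission
  imports Defs
begin


definition Pr :: "'k::field poly fract set" where
  "Pr = {f. \<exists>p q. poly q 0 \<noteq> 0 \<and> f = Fract p q}"

lemma Pr_I: "poly q 0 \<noteq> 0 \<Longrightarrow> Fract p q \<in> Pr" by (auto simp: Pr_def)

lemma Pr_E: assumes "f \<in> Pr" obtains p q where "poly q 0 \<noteq> 0" "f = Fract p q"
  using assms by (auto simp: Pr_def)

lemma Pr_add: "f \<in> Pr \<Longrightarrow> g \<in> Pr \<Longrightarrow> f + g \<in> Pr"
proof -
  assume "f \<in> Pr" "g \<in> Pr"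
  then obtain p q p' q' where h: "poly q 0 \<noteq> 0" "f = Fract p q" "poly q' 0 \<noteq> 0" "g = Fract p' q'"
    by (metis Pr_E)
  then have "q \<noteq> 0" "q' \<noteq> 0" by auto
  then have "f + g = Fract (p*q' + p'*q) (q*q')" using h by simp
  then show ?thesis using h by (auto intro!: Pr_I)
qed

lemma Pr_mult: "f \<in> Pr \<Longrightarrow> g \<in> Pr \<Longrightarrow> f * g \<in> Pr"
proof -
  assume "f \<in> Pr" "g \<in> Pr"
  then obtain p q p' q' where h: "poly q 0 \<noteq> 0" "f = Fract p q" "poly q' 0 \<noteq> 0" "g = Fract p' q'"
    by (metis Pr_E)
  then show ?thesis using h by (auto intro!: Pr_I)
qed

lemma Pr_0: "0 \<in> Pr" unfolding Zero_fract_def by (rule Pr_I) simp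
lemma Pr_1: "1 \<in> Pr" unfolding One_fract_def by (rule Pr_I) simp
lemma Pr_x: "xvar \<in> Pr" unfolding xvar_def by (rule Pr_I) simp
lemma Pr_scal: "scal r \<in> Pr" unfolding scal_def by (rule Pr_I) simp

lemma Pr_unit:
  assumes "d \<in> Pr"
  shows "1 - xvar * d \<noteq> 0" "g \<in> Pr \<Longrightarrow> g / (1 - xvar * d) \<in> Pr"
proof -
  obtain p q where pq: "poly q 0 \<noteq> 0" "d = Fract p q" using assms by (auto simp: Pr_def)
  have q0: "q \<noteq> 0" using pq by auto
  have e: "1 - xvar * d = Fract (q - [:0,1:] * p) q"
    using q0 by (simp add: pq xvar_def One_fract_def)
  have n0: "poly (q - [:0,1:] * p) 0 \<noteq> 0" using pq by simp
  hence nz: "q - [:0,1:] * p \<noteq> 0" by auto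
  show "1 - xvar * d \<noteq> 0" unfolding e using q0 nz by (simp add: Zero_fract_def eq_fract)
  assume "g \<in> Pr"
  then obtain a b where ab: "poly b 0 \<noteq> 0" "g = Fract a b" by (auto simp: Pr_def)
  have "g / (1 - xvar * d) = Fract (a * q) (b * (q - [:0,1:] * p))"
    unfolding e ab by simp
  also have "\<dots> \<in> Pr" by (rule Pr_I) (use ab n0 in simp)
  finally show "g / (1 - xvar * d) \<in> Pr" .
qed




lemma csort_CSeq_Some: "csort (CSeq c d) = Some (a,b) \<longleftrightarrow> (\<exists>k. csort c = Some (a,k) \<and> csort d = Some (k,b))"
  by (auto split: option.splits if_splits)

lemma csort_CPar_Some: "csort (CPar c d) = Some (a,b) \<longleftrightarrow>
  (\<exists>a1 b1 a2 b2. csort c = Some (a1,b1) \<and> csort d = Some (a2,b2) \<and> a = a1 + a2 \<and> b = b1 + b2)"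
  by (auto split: option.splits)

lemma den_len: "csort x = Some (a,b) \<Longrightarrow> (u,v) \<in> den x \<Longrightarrow> length u = a \<and> length v = b"
proof (induction x arbitrary: a b u v)
  case (CSeq c d)
  from CSeq.prems(1) obtain k where k: "csort c = Some (a,k)" "csort d = Some (k,b)"
    using csort_CSeq_Some by blast
  from CSeq.prems(2) obtain w where "(u,w) \<in> den c" "(w,v) \<in> den d" by auto
  then show ?case using CSeq.IH k by blast
next
  case (CPar c d)
  from CPar.prems(1) obtain a1 b1 a2 b2 where k: "csort c = Some (a1,b1)" "csort d = Some (a2,b2)"
     "a = a1 + a2" "b = b1 + b2"
    using csort_CPar_Some by blast
  from CPar.prems(2) obtain u1 u2 v1 v2 where "u = u1@u2" "v = v1@v2" "(u1,v1) \<in> den c" "(u2,v2) \<in> den d"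
    by auto
  then show ?case using CPar.IH k by fastforce
qed auto

lemma mem_CPar:
  assumes "csort c = Some (a1,b1)" "csort d = Some (a2,b2)"
  shows "(u,v) \<in> den (CPar c d) \<longleftrightarrow> (take a1 u, take b1 v) \<in> den c \<and> (drop a1 u, drop b1 v) \<in> den d"
proof
  assume "(u,v) \<in> den (CPar c d)"
  then obtain u1 u2 v1 v2 where h: "u = u1@u2" "v = v1@v2" "(u1,v1) \<in> den c" "(u2,v2) \<in> den d"
    by auto
  then have "length u1 = a1" "length v1 = b1" using den_len assms by blast+
  then show "(take a1 u, take b1 v) \<in> den c \<and> (drop a1 u, drop b1 v) \<in> den d" using h by simp
next
  assume h: "(take a1 u, take b1 v) \<in> den c \<and> (drop a1 u, drop b1 v) \<in> den d"
  have "u = take a1 u @ drop a1 u" "v = take b1 v @ drop b1 v" by simp_all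
  then show "(u,v) \<in> den (CPar c d)" unfolding den.simps using h by blast
qed

lemma csort_idn[simp]: "csort (idn n) = Some (n,n)"
  by (induction n) auto

lemma mem_Id1[simp]: "(u,v) \<in> den CId1 \<longleftrightarrow> (\<exists>p. u = [p] \<and> v = [p])" by auto

lemma mem_idn: "(u,v) \<in> den (idn n) \<longleftrightarrow> u = v \<and> length u = n"
proof (induction n arbitrary: u v)
  case 0 then show ?case by auto
next
  case (Suc n)
  have e: "(u,v) \<in> den (idn (Suc n)) \<longleftrightarrow> (take n u = take n v \<and> length (take n u) = n) \<and>
     (\<exists>p. drop n u = [p] \<and> drop n v = [p])"
    by (simp only: idn.simps mem_CPar[OF csort_idn, of _ 1 1] csort.simps Suc mem_Id1)
  show ?case
  proof
    assume "(u,v) \<in> den (idn (Suc n))"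
    then obtain p where h: "take n u = take n v" "length (take n u) = n" "drop n u = [p]" "drop n v = [p]"
      using e by blast
    have "u = take n u @ drop n u" "v = take n v @ drop n v" by simp_all
    then show "u = v \<and> length u = Suc n" using h by (metis length_append length_Cons list.size(3) add_Suc_right add_0_right)
  next
    assume h: "u = v \<and> length u = Suc n"
    then obtain w p where "u = w @ [p]" "length w = n" by (metis length_Suc_conv_rev)
    then have "drop n u = [p]" by simp
    then show "(u,v) \<in> den (idn (Suc n))" by (intro e[THEN iffD2]) (use h in auto)
  qed
qed




definition gr :: "nat \<Rightarrow> ('a list \<Rightarrow> 'a list) \<Rightarrow> ('a list \<times> 'a list) set" where
  "gr a f = {(u, f u) | u. length u = a}"

lemma mem_gr[simp]: "(u,v) \<in> gr a f \<longleftrightarrow> length u = a \<and> v = f u"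
  by (auto simp: gr_def)

lemma gr_comp:
  assumes "\<And>u. length u = a \<Longrightarrow> length (f u) = a"
  shows "gr a f O gr a g = gr a (g \<circ> f)"
  using assms by (auto simp: gr_def)

lemma decomp:
  assumes "i + d < length u"
  shows "\<exists>w p y z. u = w @ p # y @ z \<and> length w = i \<and> length y = d"
proof -
  have "u = take i u @ drop i u" by simp
  moreover have "drop i u = u!i # drop (Suc i) u" using assms by (simp add: Cons_nth_drop_Suc)
  moreover have "drop (Suc i) u = take d (drop (Suc i) u) @ drop d (drop (Suc i) u)" by (rule append_take_drop_id[symmetric])
  moreover have "length (take d (drop (Suc i) u)) = d" using assms by simp
  moreover have "length (take i u) = i" using assms by simp
  ultimately show ?thesis by metis
qed

definition swf :: "nat \<Rightarrow> 'a list \<Rightarrow> 'a list" where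
  "swf k u = take k u @ [u!(Suc k), u!k] @ drop (k+2) u"

definition mRf :: "nat \<Rightarrow> nat \<Rightarrow> 'a list \<Rightarrow> 'a list" where
  "mRf i d u = take i u @ take d (drop (Suc i) u) @ [u!i] @ drop (Suc (i+d)) u"

definition mLf :: "nat \<Rightarrow> nat \<Rightarrow> 'a list \<Rightarrow> 'a list" where
  "mLf i d u = take i u @ [u!(i+d)] @ take d (drop i u) @ drop (Suc (i+d)) u"

lemma swf_eval: "length w = k \<Longrightarrow> swf k (w @ p # q # z) = w @ q # p # z"
  by (simp add: swf_def nth_append)

lemma mRf_eval: "length w = i \<Longrightarrow> length y = d \<Longrightarrow> mRf i d (w @ p # y @ z) = w @ y @ p # z"
  by (simp add: mRf_def nth_append)

lemma mLf_eval: "length w = i \<Longrightarrow> length y = d \<Longrightarrow> mLf i d (w @ y @ p # z) = w @ p # y @ z"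
  by (simp add: mLf_def nth_append)

lemma mem_Sw[simp]: "(u,v) \<in> den CSw \<longleftrightarrow> (\<exists>p q. u = [p,q] \<and> v = [q,p])" by auto

lemma csort_swap_at: "k + 2 \<le> a \<Longrightarrow> csort (swap_at k a) = Some (a,a)"
  by (simp add: swap_at_def)

lemma den_swap_at:
  assumes "k + 2 \<le> a"
  shows "den (swap_at k a) = gr a (swf k)"
proof (rule set_eqI, clarify)
  fix u v :: "'a poly fract list"
  have cs: "csort (CPar (idn k) CSw) = Some (k+2, k+2)" by simp
  show "(u,v) \<in> den (swap_at k a) \<longleftrightarrow> (u,v) \<in> gr a (swf k)"
  proof
    assume h: "(u,v) \<in> den (swap_at k a)"
    then have l: "length u = a" "length v = a" using den_len csort_swap_at[OF assms] by blast+
    obtain w p y z where u: "u = w @ p # y @ z" "length w = k" "length y = 1"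
      using decomp[of k 1 u] l assms by auto
    then obtain q where y: "y = [q]" by (metis One_nat_def length_0_conv length_Suc_conv)
    obtain w' p' y' z' where v: "v = w' @ p' # y' @ z'" "length w' = k" "length y' = 1"
      using decomp[of k 1 v] l assms by auto
    then obtain q' where y': "y' = [q']" by (metis One_nat_def length_0_conv length_Suc_conv)
    from h show "(u,v) \<in> gr a (swf k)"
      unfolding swap_at_def mem_CPar[OF cs csort_idn] mem_CPar[OF csort_idn csort.simps(17)]
      using u y v y' l by (auto simp: mem_idn swf_eval)
  next
    assume h: "(u,v) \<in> gr a (swf k)"
    then have l: "length u = a" by simp
    obtain w p y z where u: "u = w @ p # y @ z" "length w = k" "length y = 1"
      using decomp[of k 1 u] l assms by auto
    then obtain q where y: "y = [q]" by (metis One_nat_def length_0_conv length_Suc_conv)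
    show "(u,v) \<in> den (swap_at k a)"
      unfolding swap_at_def mem_CPar[OF cs csort_idn] mem_CPar[OF csort_idn csort.simps(17)]
      using u y h l by (auto simp: mem_idn swf_eval)
  qed
qed

lemma gr_cong: "(\<And>u. length u = a \<Longrightarrow> f u = g u) \<Longrightarrow> gr a f = gr a g"
  by (auto simp: gr_def)

lemma den_idn_gr: "den (idn a) = gr a id"
  by (auto simp: mem_idn)

lemma len_swf: "k + 2 \<le> length u \<Longrightarrow> length (swf k u) = length u"
  by (simp add: swf_def)

lemma csort_moveR: "i + d < a \<Longrightarrow> csort (moveR i d a) = Some (a,a)"
  by (induction d arbitrary: i) (auto simp: csort_swap_at)

lemma den_moveR: "i + d < a \<Longrightarrow> den (moveR i d a) = gr a (mRf i d)"
proof (induction d arbitrary: i)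
  case 0
  show ?case unfolding moveR.simps den_idn_gr
  proof (rule gr_cong)
    fix u :: "'a poly fract list" assume "length u = a"
    then obtain w p y z where "u = w @ p # y @ z" "length w = i" "length y = 0"
      using decomp[of i 0 u] 0 by auto
    then show "id u = mRf i 0 u" using mRf_eval[of w i "[]" 0 p z] by simp
  qed
next
  case (Suc d)
  have ih: "den (moveR (Suc i) d a :: 'a circ) = gr a (mRf (Suc i) d)" using Suc by simp
  have sw: "den (swap_at i a :: 'a circ) = gr a (swf i)" using Suc.prems by (simp add: den_swap_at)
  have "den (moveR i (Suc d) a :: 'a circ) = gr a (swf i) O gr a (mRf (Suc i) d)"
    by (simp only: moveR.simps den.simps ih sw)
  also have "\<dots> = gr a (mRf (Suc i) d \<circ> swf i)"
    by (rule gr_comp) (use Suc.prems in \<open>simp add: len_swf\<close>)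
  also have "\<dots> = gr a (mRf i (Suc d))"
  proof (rule gr_cong)
    fix u :: "'a poly fract list" assume "length u = a"
    then obtain w p y z where u: "u = w @ p # y @ z" "length w = i" "length y = Suc d"
      using decomp[of i "Suc d" u] Suc.prems by auto
    then obtain q y' where y: "y = q # y'" "length y' = d" by (metis length_Suc_conv)
    have "swf i u = (w @ [q]) @ p # y' @ z" using u y by (simp add: swf_eval)
    then show "(mRf (Suc i) d \<circ> swf i) u = mRf i (Suc d) u"
      using u y mRf_eval[of "w@[q]" "Suc i" y' d p z] mRf_eval[of w i "q#y'" "Suc d" p z] by simp
  qed
  finally show ?case .
qed

lemma csort_moveL: "i + d < a \<Longrightarrow> csort (moveL i d a) = Some (a,a)"
  by (induction d arbitrary: i) (auto simp: csort_swap_at)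

lemma len_mLf: "i + d < length u \<Longrightarrow> length (mLf i d u) = length u"
  by (simp add: mLf_def)

lemma den_moveL: "i + d < a \<Longrightarrow> den (moveL i d a) = gr a (mLf i d)"
proof (induction d arbitrary: i)
  case 0
  show ?case unfolding moveL.simps den_idn_gr
  proof (rule gr_cong)
    fix u :: "'a poly fract list" assume "length u = a"
    then obtain w p y z where "u = w @ p # y @ z" "length w = i" "length y = 0"
      using decomp[of i 0 u] 0 by auto
    then show "id u = mLf i 0 u" using mLf_eval[of w i "[]" 0 p z] by simp
  qed
next
  case (Suc d)
  have ih: "den (moveL (Suc i) d a :: 'a circ) = gr a (mLf (Suc i) d)" using Suc by simp
  have sw: "den (swap_at i a :: 'a circ) = gr a (swf i)" using Suc.prems by (simp add: den_swap_at)
  have "den (moveL i (Suc d) a :: 'a circ) = gr a (mLf (Suc i) d) O gr a (swf i)"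
    by (simp only: moveL.simps den.simps ih sw)
  also have "\<dots> = gr a (swf i \<circ> mLf (Suc i) d)"
    by (rule gr_comp) (use Suc.prems in \<open>simp add: len_mLf\<close>)
  also have "\<dots> = gr a (mLf i (Suc d))"
  proof (rule gr_cong)
    fix u :: "'a poly fract list" assume "length u = a"
    then obtain w q y p z where u: "u = w @ q # y @ p # z" "length w = i" "length y = d"
    proof -
      obtain w q y0 z where h: "u = w @ q # y0 @ z" "length w = i" "length y0 = d"
        using decomp[of i d u] Suc.prems \<open>length u = a\<close> by auto
      have "z \<noteq> []"
      proof
        assume "z = []" then show False using h Suc.prems \<open>length u = a\<close> by simp
      qed
      then obtain p z' where "z = p # z'" by (metis neq_Nil_conv)
      then show thesis using that[of w q "y0" p z'] h by simp
    qed
    have "mLf (Suc i) d u = (w @ [q]) @ p # y @ z" using u mLf_eval[of "w@[q]" "Suc i" y d p z] by simp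
    then show "(swf i \<circ> mLf (Suc i) d) u = mLf i (Suc d) u"
      using u mLf_eval[of w i "q # y" "Suc d" p z] by (simp add: swf_eval)
  qed
  finally show ?case .
qed




lemma mem_CPar_idnL: "(x,y) \<in> den (CPar (idn n) X) \<longleftrightarrow>
   (\<exists>w x' y'. x = w@x' \<and> y = w@y' \<and> length w = n \<and> (x',y') \<in> den X)"
  by (auto simp: mem_idn)

lemma mem_CPar_Id1R: "(x,y) \<in> den (CPar X CId1) \<longleftrightarrow> (\<exists>x' y' p. x = x'@[p] \<and> y = y'@[p] \<and> (x',y') \<in> den X)"
proof
  assume "(x,y) \<in> den (CPar X CId1)" then show "\<exists>x' y' p. x = x'@[p] \<and> y = y'@[p] \<and> (x',y') \<in> den X" by auto
next
  assume "\<exists>x' y' p. x = x'@[p] \<and> y = y'@[p] \<and> (x',y') \<in> den X"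
  then obtain x' y' p where h: "x = x'@[p]" "y = y'@[p]" "(x',y') \<in> den X" by blast
  have "([p],[p]) \<in> den CId1" by simp
  then show "(x,y) \<in> den (CPar X CId1)" unfolding den.simps h(1,2) using h(3) by blast
qed

lemma mem_CSeq: "(x,y) \<in> den (CSeq c d) \<longleftrightarrow> (\<exists>m. (x,m) \<in> den c \<and> (m,y) \<in> den d)"
  by auto

lemma mem_cup: "(x,y) \<in> den cup \<longleftrightarrow> x = [] \<and> (\<exists>p. y = [p,p])"
  by (auto simp: cup_def)

lemma mem_cap: "(x,y) \<in> den cap \<longleftrightarrow> (\<exists>p. x = [p,p]) \<and> y = []"
  by (auto simp: cap_def)

lemma csort_cup[simp]: "csort cup = Some (0,2)" by (simp add: cup_def)
lemma csort_cap[simp]: "csort cap = Some (2,0)" by (simp add: cap_def)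

lemma mem_Reg: "(x,y) \<in> den CReg \<longleftrightarrow> (\<exists>p. x = [p] \<and> y = [p*xvar])" by auto

lemma mem_idn_cap: "(x,y) \<in> den (CPar (idn n) cap) \<longleftrightarrow> (\<exists>p. x = y@[p,p] \<and> length y = n)"
  unfolding mem_CPar_idnL mem_cap by auto

lemma mem_idnReg: "(x,y) \<in> den (CPar (CPar (idn m) CReg) CId1) \<longleftrightarrow>
   (\<exists>v t s. x = v@[t,s] \<and> y = v@[t*xvar,s] \<and> length v = m)"
  unfolding mem_CPar_Id1R mem_CPar_idnL mem_Reg
proof (intro iffI; elim exE conjE)
  fix v t s assume h: "x = v@[t,s]" "y = v@[t*xvar,s]" "length v = m"
  show "\<exists>x' y' p. x = x' @ [p] \<and> y = y' @ [p] \<and>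
     (\<exists>w x'a y'a. x' = w @ x'a \<and> y' = w @ y'a \<and> length w = m \<and> (\<exists>p. x'a = [p] \<and> y'a = [p * xvar]))"
    by (rule exI[of _ "v@[t]"], rule exI[of _ "v@[t*xvar]"], rule exI[of _ s]) (use h in auto)
qed auto

lemma mem_idn_cup: "(x,y) \<in> den (CPar (idn n) cup) \<longleftrightarrow> (\<exists>p. y = x@[p,p] \<and> length x = n)"
  unfolding mem_CPar_idnL mem_cup by auto

lemma mRf_end:
  assumes "length v = b" "j < b"
  shows "mRf j (b-1-j) v = take j v @ drop (Suc j) v @ [v!j]"
proof -
  obtain w p y z where h: "v = w @ p # y @ z" "length w = j" "length y = b-1-j"
    using decomp[of j "b-1-j" v] assms by auto
  then have "z = []" using assms by auto
  then show ?thesis using h mRf_eval[of w j y "b-1-j" p z] by (simp add: nth_append)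
qed

lemma mLf_end:
  assumes "length x = a - 1" "i < a"
  shows "mLf i (a-1-i) (x@[p]) = take i x @ p # drop i x"
proof -
  have e: "x @ [p] = take i x @ drop i x @ p # []" by simp
  have "length (take i x) = i" "length (drop i x) = a-1-i" using assms by simp_all
  then have "mLf i (a-1-i) (take i x @ drop i x @ p # []) = take i x @ p # drop i x @ []"
    by (rule mLf_eval)
  then show ?thesis by (simp only: e) simp
qed

lemma csort_bendR: "csort c = Some (a,b) \<Longrightarrow> j < b \<Longrightarrow> csort (bendR j a b c) = Some (Suc a, b - 1)"
  by (simp add: bendR_def csort_moveR)

lemma mem_bendR:
  assumes c: "csort c = Some (a,b)" and j: "j < b"
  shows "(x,y) \<in> den (bendR j a b c) \<longleftrightarrow> (\<exists>u v. (u,v) \<in> den c \<and> x = u@[v!j] \<and> y = take j v @ drop (Suc j) v)"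
proof -
  have mv: "den (moveR j (b-1-j) b :: 'a circ) = gr b (mRf j (b-1-j))" by (rule den_moveR) (use j in simp)
  have "(x,y) \<in> den (bendR j a b c) \<longleftrightarrow>
     (\<exists>u v q. (u,v) \<in> den c \<and> x = u@[q] \<and> (\<exists>p. mRf j (b-1-j) v @ [q] = y@[p,p] \<and> length y = b - 1))"
    unfolding bendR_def mem_CSeq mem_CPar_Id1R mem_idn_cap mv mem_gr
    using den_len[OF c] by blast
  also have "\<dots> \<longleftrightarrow> (\<exists>u v. (u,v) \<in> den c \<and> x = u@[v!j] \<and> y = take j v @ drop (Suc j) v)"
  proof (intro iffI; elim exE conjE)
    fix u v q p assume h: "(u,v) \<in> den c" "x = u@[q]" "mRf j (b-1-j) v @ [q] = y@[p,p]" "length y = b - 1"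
    have lv: "length v = b" using den_len[OF c h(1)] by simp
    have "take j v @ drop (Suc j) v @ [v!j, q] = y @ [p,p]" using h(3) mRf_end[OF lv j] by simp
    then have "take j v @ drop (Suc j) v = y \<and> v!j = p \<and> q = p"
      using lv j h(4) by (auto simp: append_eq_append_conv)
    then show "\<exists>u v. (u,v) \<in> den c \<and> x = u@[v!j] \<and> y = take j v @ drop (Suc j) v" using h by blast
  next
    fix u v assume h: "(u,v) \<in> den c" "x = u@[v!j]" "y = take j v @ drop (Suc j) v"
    have lv: "length v = b" using den_len[OF c h(1)] by simp
    show "\<exists>u v q. (u,v) \<in> den c \<and> x = u@[q] \<and> (\<exists>p. mRf j (b-1-j) v @ [q] = y@[p,p] \<and> length y = b - 1)"
      using h mRf_end[OF lv j] lv j by auto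
  qed
  finally show ?thesis .
qed

lemma csort_bendL: "csort c = Some (a,b) \<Longrightarrow> i < a \<Longrightarrow> csort (bendL i a b c) = Some (a - 1, Suc b)"
  by (simp add: bendL_def csort_moveL)

lemma mem_bendL:
  assumes c: "csort c = Some (a,b)" and i: "i < a"
  shows "(x,y) \<in> den (bendL i a b c) \<longleftrightarrow> (\<exists>u v. (u,v) \<in> den c \<and> x = take i u @ drop (Suc i) u \<and> y = v @ [u!i])"
proof -
  have mv: "den (moveL i (a-1-i) a :: 'a circ) = gr a (mLf i (a-1-i))" by (rule den_moveL) (use i in simp)
  have "(x,y) \<in> den (bendL i a b c) \<longleftrightarrow>
     (\<exists>p v. length x = a - 1 \<and> (mLf i (a-1-i) (x@[p]), v) \<in> den c \<and> y = v@[p])"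
    unfolding bendL_def mem_CSeq mem_CPar_Id1R mem_idn_cup mv mem_gr
    using i by auto
  also have "\<dots> \<longleftrightarrow> (\<exists>u v. (u,v) \<in> den c \<and> x = take i u @ drop (Suc i) u \<and> y = v @ [u!i])"
  proof (intro iffI; elim exE conjE)
    fix p v assume h: "length x = a - 1" "(mLf i (a-1-i) (x@[p]), v) \<in> den c" "y = v@[p]"
    let ?u = "take i x @ p # drop i x"
    have "(?u, v) \<in> den c" using h mLf_end[OF h(1) i] by simp
    moreover have "take i ?u @ drop (Suc i) ?u = x" "?u ! i = p" using h(1) i by (simp_all add: nth_append)
    ultimately show "\<exists>u v. (u,v) \<in> den c \<and> x = take i u @ drop (Suc i) u \<and> y = v @ [u!i]" using h by metis
  next
    fix u v assume h: "(u,v) \<in> den c" "x = take i u @ drop (Suc i) u" "y = v @ [u!i]"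
    have lu: "length u = a" using den_len[OF c h(1)] by simp
    have lx: "length x = a - 1" using h lu i by simp
    have "take i x @ (u!i) # drop i x = u" using h(2) lu i
      by (simp add: id_take_nth_drop[symmetric])
    then have "mLf i (a-1-i) (x@[u!i]) = u" using mLf_end[OF lx i] by simp
    then show "\<exists>p v. length x = a - 1 \<and> (mLf i (a-1-i) (x@[p]), v) \<in> den c \<and> y = v@[p]"
      using h lx by metis
  qed
  finally show ?thesis .
qed

lemma csort_trc: "csort c = Some (Suc n, Suc m) \<Longrightarrow> csort (trc n m c) = Some (n,m)"
  by (simp add: trc_def)

lemma mem_trc:
  assumes c: "csort c = Some (Suc n, Suc m)"
  shows "(u,w) \<in> den (trc n m c) \<longleftrightarrow> (\<exists>q. (u@[q*xvar], w@[q]) \<in> den c)"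
proof -
  have "(u,w) \<in> den (trc n m c) \<longleftrightarrow>
    (\<exists>s y. length u = n \<and> (u@[s], y) \<in> den c \<and>
       (\<exists>v t. y = v@[t] \<and> length v = m \<and> (v@[t*xvar, s], w) \<in> den (CPar (idn m) cap)))"
    (is "_ \<longleftrightarrow> ?M")
  proof
    assume "(u,w) \<in> den (trc n m c)"
    then show ?M
      unfolding trc_def mem_CSeq mem_CPar_Id1R mem_idn_cup
      apply (elim exE conjE)
      subgoal premises h for ma maa mb x' y' p pa x'a y'a pb
      proof -
        have "(u @ [pa]) @ [pa] = x'a @ [pb]" using h by simp
        then have x': "x'a = u @ [pa]" "pb = pa" by (metis append1_eq_conv)+
        have "x' = y'a" "p = pb" using h by (metis append1_eq_conv)+
        obtain v t where vt: "x' = v@[t]" "y' = v@[t*xvar]" "length v = m"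
          using h(7) unfolding mem_CPar_idnL mem_Reg by blast
        show ?thesis
          apply (rule exI[of _ pa], rule exI[of _ "y'a"])
          using h x' vt \<open>x' = y'a\<close> \<open>p = pb\<close> by auto
      qed
      done
  next
    assume ?M
    then obtain s y v t where h: "length u = n" "(u@[s], y) \<in> den c" "y = v@[t]" "length v = m"
      "(v@[t*xvar, s], w) \<in> den (CPar (idn m) cap)" by blast
    have 1: "(u, u@[s,s]) \<in> den (CPar (idn n) cup)" unfolding mem_idn_cup using h(1) by blast
    have 2: "(u@[s,s], y@[s]) \<in> den (CPar c CId1)" unfolding mem_CPar_Id1R using h(2) by force
    have 3: "(y@[s], v@[t*xvar, s]) \<in> den (CPar (CPar (idn m) CReg) CId1)" unfolding mem_idnReg using h by auto
    show "(u,w) \<in> den (trc n m c)" unfolding trc_def mem_CSeq using 1 2 3 h(5) by blast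
  qed
  also have "\<dots> \<longleftrightarrow> (\<exists>q. (u@[q*xvar], w@[q]) \<in> den c)"
    unfolding mem_idn_cap
  proof (intro iffI; elim exE conjE)
    fix s y v t p assume h: "length u = n" "(u@[s], y) \<in> den c" "y = v@[t]" "length v = m" "v @ [t*xvar, s] = w @ [p,p]" "length w = m"
    then have "v = w" "t * xvar = s" by (auto simp: append_eq_append_conv)
    then show "\<exists>q. (u@[q*xvar], w@[q]) \<in> den c" using h by blast
  next
    fix q assume h: "(u@[q*xvar], w@[q]) \<in> den c"
    then have "length u = n" "length w = m" using den_len[OF c h] by auto
    then show "\<exists>s y. length u = n \<and> (u@[s], y) \<in> den c \<and>
       (\<exists>v t. y = v@[t] \<and> length v = m \<and> (\<exists>p. v @ [t*xvar, s] = w @ [p,p] \<and> length w = m))"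
      using h by auto
  qed
  finally show ?thesis .
qed




definition vadd :: "'a::field list \<Rightarrow> 'a list \<Rightarrow> 'a list" where
  "vadd u w = map2 (+) u w"

definition smul :: "'a::field \<Rightarrow> 'a list \<Rightarrow> 'a list" where
  "smul c u = map ((*) c) u"

lemma vadd_simps[simp]: "vadd [] w = []" "vadd u [] = []" "vadd (a#u) (b#w) = (a+b) # vadd u w"
  by (auto simp: vadd_def)

lemma smul_simps[simp]: "smul c [] = []" "smul c (a#u) = (c*a) # smul c u" "smul c (u@w) = smul c u @ smul c w"
  "length (smul c u) = length u"
  by (auto simp: smul_def)

lemma vadd_append: "length a = length a' \<Longrightarrow> vadd (a@b) (a'@b') = vadd a a' @ vadd b b'"
  by (simp add: vadd_def)

lemma length_vadd[simp]: "length (vadd u w) = min (length u) (length w)"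
  by (simp add: vadd_def)

lemma vadd_cancel: "length a = length b \<Longrightarrow> vadd (vadd a b) (smul (-1) b) = a"
  by (induction a b rule: list_induct2) auto

lemma smul_cancel: "p \<noteq> 0 \<Longrightarrow> smul p (smul (1/p) u) = u"
  by (induction u) auto

definition linrel :: "('a::field list \<times> 'a list) set \<Rightarrow> bool" where
  "linrel R \<longleftrightarrow> (\<forall>u v u' v'. (u,v)\<in>R \<longrightarrow> (u',v')\<in>R \<longrightarrow> (vadd u u', vadd v v') \<in> R) \<and>
                 (\<forall>c u v. (u,v)\<in>R \<longrightarrow> (smul c u, smul c v) \<in> R)"

lemma linrelI:
  assumes "\<And>u v u' v'. (u,v)\<in>R \<Longrightarrow> (u',v')\<in>R \<Longrightarrow> (vadd u u', vadd v v') \<in> R"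
    "\<And>c u v. (u,v)\<in>R \<Longrightarrow> (smul c u, smul c v) \<in> R"
  shows "linrel R" using assms unfolding linrel_def by blast

lemma linrelD: "linrel R \<Longrightarrow> (u,v)\<in>R \<Longrightarrow> (u',v')\<in>R \<Longrightarrow> (vadd u u', vadd v v') \<in> R"
  "linrel R \<Longrightarrow> (u,v)\<in>R \<Longrightarrow> (smul c u, smul c v) \<in> R"
  unfolding linrel_def by blast+

lemma lin_den: "count_one x = 0 \<Longrightarrow> count_oneop x = 0 \<Longrightarrow> csort x = Some (a,b) \<Longrightarrow> linrel (den x)"
proof (induction x arbitrary: a b)
  case (CSeq c d)
  from CSeq.prems(3) obtain k where k: "csort c = Some (a,k)" "csort d = Some (k,b)"
    using csort_CSeq_Some by blast
  have lc: "linrel (den c)" and ld: "linrel (den d)" using CSeq k by auto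
  show ?case
  proof (rule linrelI)
    fix u v u' v' assume "(u,v) \<in> den (CSeq c d)" "(u',v') \<in> den (CSeq c d)"
    then obtain m m' where "(u,m) \<in> den c" "(m,v) \<in> den d" "(u',m') \<in> den c" "(m',v') \<in> den d" by auto
    then have "(vadd u u', vadd m m') \<in> den c" "(vadd m m', vadd v v') \<in> den d"
      using linrelD(1)[OF lc] linrelD(1)[OF ld] by blast+
    then show "(vadd u u', vadd v v') \<in> den (CSeq c d)" by auto
  next
    fix s u v assume "(u,v) \<in> den (CSeq c d)"
    then obtain m where "(u,m) \<in> den c" "(m,v) \<in> den d" by auto
    then have "(smul s u, smul s m) \<in> den c" "(smul s m, smul s v) \<in> den d"
      using linrelD(2)[OF lc] linrelD(2)[OF ld] by blast+
    then show "(smul s u, smul s v) \<in> den (CSeq c d)" by auto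
  qed
next
  case (CPar c d)
  from CPar.prems(3) obtain a1 b1 a2 b2 where k: "csort c = Some (a1,b1)" "csort d = Some (a2,b2)"
    using csort_CPar_Some by blast
  have lc: "linrel (den c)" and ld: "linrel (den d)" using CPar k by auto
  show ?case
  proof (rule linrelI)
    fix u v u' v' assume "(u,v) \<in> den (CPar c d)" "(u',v') \<in> den (CPar c d)"
    then obtain u1 u2 v1 v2 u1' u2' v1' v2' where h: "u = u1@u2" "v = v1@v2" "(u1,v1) \<in> den c" "(u2,v2) \<in> den d"
       "u' = u1'@u2'" "v' = v1'@v2'" "(u1',v1') \<in> den c" "(u2',v2') \<in> den d" by auto
    have l: "length u1 = length u1'" "length v1 = length v1'" using den_len[OF k(1)] h by metis+
    have "(vadd u1 u1', vadd v1 v1') \<in> den c" "(vadd u2 u2', vadd v2 v2') \<in> den d"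
      using linrelD(1)[OF lc] linrelD(1)[OF ld] h by blast+
    then show "(vadd u u', vadd v v') \<in> den (CPar c d)" using h l by (auto simp: vadd_append)
  next
    fix s u v assume "(u,v) \<in> den (CPar c d)"
    then obtain u1 u2 v1 v2 where h: "u = u1@u2" "v = v1@v2" "(u1,v1) \<in> den c" "(u2,v2) \<in> den d" by auto
    have "(smul s u1, smul s v1) \<in> den c" "(smul s u2, smul s v2) \<in> den d"
      using linrelD(2)[OF lc] linrelD(2)[OF ld] h by blast+
    then show "(smul s u, smul s v) \<in> den (CPar c d)" using h by auto
  qed
next
  case (CAmpOp r)
  show ?case
  proof (rule linrelI)
    fix u v u' v' assume "(u,v) \<in> den (CAmpOp r :: 'a circ)" "(u',v') \<in> den (CAmpOp r :: 'a circ)"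
    then obtain p q where "u = [scal r * p]" "v = [p]" "u' = [scal r * q]" "v' = [q]" by auto
    then show "(vadd u u', vadd v v') \<in> den (CAmpOp r :: 'a circ)" by (auto simp: algebra_simps)
  next
    fix s u v assume "(u,v) \<in> den (CAmpOp r :: 'a circ)"
    then obtain p where "u = [scal r * p]" "v = [p]" by auto
    then show "(smul s u, smul s v) \<in> den (CAmpOp r :: 'a circ)" by (auto simp: algebra_simps)
  qed
next
  case CRegOp
  show ?case
  proof (rule linrelI)
    fix u v u' v' assume "(u,v) \<in> den (CRegOp :: 'a circ)" "(u',v') \<in> den (CRegOp :: 'a circ)"
    then obtain p q where "u = [p * xvar]" "v = [p]" "u' = [q * xvar]" "v' = [q]" by auto
    then show "(vadd u u', vadd v v') \<in> den (CRegOp :: 'a circ)" by (auto simp: algebra_simps)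
  next
    fix s u v assume "(u,v) \<in> den (CRegOp :: 'a circ)"
    then obtain p where "u = [p * xvar]" "v = [p]" by auto
    then show "(smul s u, smul s v) \<in> den (CRegOp :: 'a circ)" by (auto simp: algebra_simps)
  qed
next
  case CAddOp
  show ?case
  proof (rule linrelI)
    fix u v u' v' assume "(u,v) \<in> den (CAddOp :: 'a circ)" "(u',v') \<in> den (CAddOp :: 'a circ)"
    then obtain p q p' q' where "u = [p + q]" "v = [p,q]" "u' = [p' + q']" "v' = [p',q']" by auto
    then show "(vadd u u', vadd v v') \<in> den (CAddOp :: 'a circ)" by (auto simp: algebra_simps)
  next
    fix s u v assume "(u,v) \<in> den (CAddOp :: 'a circ)"
    then obtain p q where "u = [p + q]" "v = [p,q]" by auto
    then show "(smul s u, smul s v) \<in> den (CAddOp :: 'a circ)" by (auto simp: algebra_simps)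
  qed
qed (auto simp: linrel_def algebra_simps)

definition slice1 :: "('a::field list \<times> 'a list) set \<Rightarrow> ('a list \<times> 'a list) set" where
  "slice1 R = {(u,v). (1#u, v) \<in> R}"

lemma mem_slice1[simp]: "(u,v) \<in> slice1 R \<longleftrightarrow> (1#u, v) \<in> R" by (simp add: slice1_def)

lemma lin_sub:
  assumes l1: "linrel R1" and l2: "linrel R2"
    and len: "\<And>x y. (x,y) \<in> R1 \<Longrightarrow> length x = Suc a \<and> length y = b"
    and s: "slice1 R1 = slice1 R2" and ne: "(u0,v0) \<in> slice1 R1"
  shows "R1 \<subseteq> R2"
proof clarify
  fix x y assume xy: "(x,y) \<in> R1"
  then obtain p u where x: "x = p # u" using len[OF xy] by (cases x) auto
  have lu: "length u = a" "length y = b" using len[OF xy] x by auto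
  have e1: "(1#u0, v0) \<in> R1" using ne by simp
  have e2: "(1#u0, v0) \<in> R2" using ne s by (metis mem_slice1)
  have lu0: "length u0 = a" "length v0 = b" using len[OF e1] by auto
  show "(x,y) \<in> R2"
  proof (cases "p = 0")
    case False
    have "(smul (1/p) x, smul (1/p) y) \<in> R1" using linrelD(2)[OF l1 xy] .
    then have "(1 # smul (1/p) u, smul (1/p) y) \<in> R1" using False x by simp
    then have "(1 # smul (1/p) u, smul (1/p) y) \<in> R2" using s by (metis mem_slice1)
    then have "(smul p (1 # smul (1/p) u), smul p (smul (1/p) y)) \<in> R2" using linrelD(2)[OF l2] by blast
    then show ?thesis using False x by (simp add: smul_cancel)
  next
    case True
    have "(vadd x (1#u0), vadd y v0) \<in> R1" using linrelD(1)[OF l1 xy e1] .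
    then have "(1 # vadd u u0, vadd y v0) \<in> R1" using True x by simp
    then have h: "(1 # vadd u u0, vadd y v0) \<in> R2" using s by (metis mem_slice1)
    have "(smul (-1) (1#u0), smul (-1) v0) \<in> R2" using linrelD(2)[OF l2 e2] .
    from linrelD(1)[OF l2 h this] have "(0 # vadd (vadd u u0) (smul (-1) u0), vadd (vadd y v0) (smul (-1) v0)) \<in> R2"
      by simp
    then show ?thesis using True x lu lu0 by (simp add: vadd_cancel)
  qed
qed




lemma cnt_idn[simp]: "count_one (idn n) = 0" "count_oneop (idn n) = 0"
  by (induction n) auto

lemma cnt_swap[simp]: "count_one (swap_at k a) = 0" "count_oneop (swap_at k a) = 0"
  by (simp_all add: swap_at_def)

lemma cnt_moveR[simp]: "count_one (moveR i d a) = 0" "count_oneop (moveR i d a) = 0"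
  by (induction d arbitrary: i) auto

lemma cnt_moveL[simp]: "count_one (moveL i d a) = 0" "count_oneop (moveL i d a) = 0"
  by (induction d arbitrary: i) auto

lemma cnt_cupcap[simp]: "count_one cup = 0" "count_oneop cup = 0" "count_one cap = 0" "count_oneop cap = 0"
  by (simp_all add: cup_def cap_def)

lemma cnt_hatc: "count_one x \<ge> 1 \<Longrightarrow> count_one (hatc x) = count_one x - 1"
  by (induction x) (auto simp: Let_def)

lemma cntop_hatc: "count_oneop (hatc x) = count_oneop x"
  by (induction x) (auto simp: Let_def)

lemma mem_CPar_Id1: "(x,y) \<in> den (CPar CId1 c) \<longleftrightarrow> (\<exists>p u v. x = p#u \<and> y = p#v \<and> (u,v) \<in> den c)"
proof
  assume "(x,y) \<in> den (CPar CId1 c)" then show "\<exists>p u v. x = p#u \<and> y = p#v \<and> (u,v) \<in> den c" by auto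
next
  assume "\<exists>p u v. x = p#u \<and> y = p#v \<and> (u,v) \<in> den c"
  then obtain p u v where h: "x = p#u" "y = p#v" "(u,v) \<in> den c" by blast
  have "([p],[p]) \<in> den CId1" by simp
  then have "([p]@u, [p]@v) \<in> den (CPar CId1 c)" unfolding den.simps using h(3) by blast
  then show "(x,y) \<in> den (CPar CId1 c)" using h by simp
qed

lemma slice1_relcomp: "slice1 (R O S) = slice1 R O S"
  by (auto simp: slice1_def)

lemma hatc_props:
  "count_one x \<ge> 1 \<Longrightarrow> csort x = Some (a,b) \<Longrightarrow>
     csort (hatc x) = Some (Suc a, b) \<and> slice1 (den (hatc x)) = den x"
proof (induction x arbitrary: a b)
  case COne
  then show ?case by (auto simp: slice1_def)
next
  case (CSeq c d)
  from CSeq.prems(2) obtain k where k: "csort c = Some (a,k)" "csort d = Some (k,b)"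
    using csort_CSeq_Some by blast
  show ?case
  proof (cases "0 < count_one c")
    case True
    then have ih: "csort (hatc c) = Some (Suc a, k)" "slice1 (den (hatc c)) = den c" using CSeq.IH(1) k by auto
    show ?thesis using True ih k by (simp add: slice1_relcomp)
  next
    case False
    then have ih: "csort (hatc d) = Some (Suc k, b)" "slice1 (den (hatc d)) = den d" using CSeq.IH(2) CSeq.prems k by auto
    have "csort (hatc (CSeq c d)) = Some (Suc a, b)" using False ih k by simp
    moreover have "slice1 (den (hatc (CSeq c d))) = den (CSeq c d)"
    proof (rule set_eqI, clarify)
      fix u w
      have hc: "hatc (CSeq c d) = CSeq (CPar CId1 c) (hatc d)" using False by simp
      have "(u,w) \<in> slice1 (den (hatc (CSeq c d))) \<longleftrightarrow> (\<exists>m. (1#u, m) \<in> den (CPar CId1 c) \<and> (m,w) \<in> den (hatc d))"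
        by (simp only: hc mem_slice1 mem_CSeq)
      also have "\<dots> \<longleftrightarrow> (\<exists>v. (u,v) \<in> den c \<and> (1#v,w) \<in> den (hatc d))"
        unfolding mem_CPar_Id1 by blast
      also have "\<dots> \<longleftrightarrow> (u,w) \<in> den (CSeq c d)" using ih(2) by (auto simp: slice1_def)
      finally show "(u,w) \<in> slice1 (den (hatc (CSeq c d))) \<longleftrightarrow> (u,w) \<in> den (CSeq c d)" .
    qed
    ultimately show ?thesis by blast
  qed
next
  case (CPar c d)
  from CPar.prems(2) obtain a1 b1 a2 b2 where k: "csort c = Some (a1,b1)" "csort d = Some (a2,b2)"
     "a = a1 + a2" "b = b1 + b2"
    using csort_CPar_Some by blast
  show ?case
  proof (cases "0 < count_one c")
    case True
    then have ih: "csort (hatc c) = Some (Suc a1, b1)" "slice1 (den (hatc c)) = den c" using CPar.IH(1) k by auto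
    have "csort (hatc (CPar c d)) = Some (Suc a, b)" using True ih k by simp
    moreover have "slice1 (den (hatc (CPar c d))) = den (CPar c d)"
    proof (rule set_eqI, clarify)
      fix u v
      have "(u,v) \<in> slice1 (den (hatc (CPar c d))) \<longleftrightarrow> (1#u, v) \<in> den (CPar (hatc c) d)"
        using True by simp
      also have "\<dots> \<longleftrightarrow> (1 # take a1 u, take b1 v) \<in> den (hatc c) \<and> (drop a1 u, drop b1 v) \<in> den d"
        unfolding mem_CPar[OF ih(1) k(2)] by simp
      also have "\<dots> \<longleftrightarrow> (u,v) \<in> den (CPar c d)"
        unfolding mem_CPar[OF k(1,2)] using ih(2) mem_slice1 by blast
      finally show "(u,v) \<in> slice1 (den (hatc (CPar c d))) \<longleftrightarrow> (u,v) \<in> den (CPar c d)" .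
    qed
    ultimately show ?thesis by blast
  next
    case False
    then have ih: "csort (hatc d) = Some (Suc a2, b2)" "slice1 (den (hatc d)) = den d"
      using CPar.IH(2) CPar.prems k by auto
    have mv: "den (moveR 0 a1 (a1 + a2 + 1) :: 'a circ) = gr (a1 + a2 + 1) (mRf 0 a1)"
      by (rule den_moveR) simp
    have "csort (hatc (CPar c d)) = Some (Suc a, b)" using False ih k by (simp add: Let_def csort_moveR)
    moreover have "slice1 (den (hatc (CPar c d))) = den (CPar c d)"
    proof (rule set_eqI, clarify)
      fix u v
      have "(u,v) \<in> slice1 (den (hatc (CPar c d))) \<longleftrightarrow>
          length u = a1 + a2 \<and> (mRf 0 a1 (1#u), v) \<in> den (CPar c (hatc d))"
      proof -
        have hc: "hatc (CPar c d) = CSeq (moveR 0 a1 (a1+a2+1)) (CPar c (hatc d))" using False k by (simp add: Let_def)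
        show ?thesis by (simp only: hc mem_slice1 mem_CSeq mv mem_gr) simp
      qed
      also have "\<dots> \<longleftrightarrow> length u = a1 + a2 \<and> (take a1 u @ 1 # drop a1 u, v) \<in> den (CPar c (hatc d))"
      proof (cases "length u = a1 + a2")
        case True
        then have "mRf 0 a1 (1#u) = take a1 u @ 1 # drop a1 u"
          using mRf_eval[of "[]" 0 "take a1 u" a1 1 "drop a1 u"] by simp
        then show ?thesis by (simp only: )
      next
        case False
        then show ?thesis by blast
      qed
      also have "\<dots> \<longleftrightarrow> length u = a1 + a2 \<and> (take a1 u, take b1 v) \<in> den c \<and> (drop a1 u, drop b1 v) \<in> den d"
      proof (cases "length u = a1 + a2")
        case True
        have ihd: "\<And>x y. (1#x, y) \<in> den (hatc d) \<longleftrightarrow> (x,y) \<in> den d"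
          using ih(2) by (metis mem_slice1)
        have t: "take a1 (take a1 u @ 1 # drop a1 u) = take a1 u" "drop a1 (take a1 u @ 1 # drop a1 u) = 1 # drop a1 u"
          using True by simp_all
        show ?thesis by (simp only: mem_CPar[OF k(1) ih(1)] t ihd)
      next
        case False
        then show ?thesis by blast
      qed
      also have "\<dots> \<longleftrightarrow> (u,v) \<in> den (CPar c d)"
      proof
        assume "(u,v) \<in> den (CPar c d)"
        then have h: "(take a1 u, take b1 v) \<in> den c" "(drop a1 u, drop b1 v) \<in> den d"
          unfolding mem_CPar[OF k(1,2)] by blast+
        have "length (take a1 u) = a1" "length (drop a1 u) = a2" using den_len[OF k(1) h(1)] den_len[OF k(2) h(2)] by blast+
        then have "length u = a1 + a2" by simp
        then show "length u = a1 + a2 \<and> (take a1 u, take b1 v) \<in> den c \<and> (drop a1 u, drop b1 v) \<in> den d"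
          using h by blast
      qed (simp only: mem_CPar[OF k(1,2)])
      finally show "(u,v) \<in> slice1 (den (hatc (CPar c d))) \<longleftrightarrow> (u,v) \<in> den (CPar c d)" .
    qed
    ultimately show ?thesis by blast
  qed
qed auto




lemma cong_bendR: "csort X = csort X' \<Longrightarrow> den X = den X' \<Longrightarrow>
   csort (bendR j a b X) = csort (bendR j a b X') \<and> den (bendR j a b X) = den (bendR j a b X')"
  by (simp add: bendR_def)

lemma cong_bendL: "csort X = csort X' \<Longrightarrow> den X = den X' \<Longrightarrow>
   csort (bendL j a b X) = csort (bendL j a b X') \<and> den (bendL j a b X) = den (bendL j a b X')"
  by (simp add: bendL_def)

lemma cong_rwR: "csort X = csort X' \<Longrightarrow> den X = den X' \<Longrightarrow>
   csort (rwR X a b rI k) = csort (rwR X' a b rI k) \<and> den (rwR X a b rI k) = den (rwR X' a b rI k)"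
proof (induction k arbitrary: X X' a b)
  case (Suc k)
  show ?case using Suc.IH[OF cong_bendR[OF Suc.prems, THEN conjunct1] cong_bendR[OF Suc.prems, THEN conjunct2]]
     Suc.IH[OF Suc.prems] by simp
qed simp

lemma cong_rwL: "csort X = csort X' \<Longrightarrow> den X = den X' \<Longrightarrow>
   csort (rwL X a b lI k) = csort (rwL X' a b lI k) \<and> den (rwL X a b lI k) = den (rwL X' a b lI k)"
proof (induction k arbitrary: X X' a b)
  case (Suc k)
  show ?case using Suc.IH[OF cong_bendL[OF Suc.prems, THEN conjunct1] cong_bendL[OF Suc.prems, THEN conjunct2]]
     Suc.IH[OF Suc.prems] by simp
qed simp

lemma cong_rewiring: "csort X = csort X' \<Longrightarrow> den X = den X' \<Longrightarrow>
   csort (rewiring X n m lI rI) = csort (rewiring X' n m lI rI) \<and> den (rewiring X n m lI rI) = den (rewiring X' n m lI rI)"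
proof -
  assume a: "csort X = csort X'" "den X = den X'"
  have r: "csort (rwR X n m rI m) = csort (rwR X' n m rI m) \<and> den (rwR X n m rI m) = den (rwR X' n m rI m)"
    using cong_rwR[OF a] .
  show ?thesis unfolding rewiring_def Let_def using cong_rwL[OF r[THEN conjunct1] r[THEN conjunct2]] .
qed

lemma cnt_bend[simp]: "count_one (bendR j a b X) = count_one X" "count_oneop (bendR j a b X) = count_oneop X"
  "count_one (bendL j a b X) = count_one X" "count_oneop (bendL j a b X) = count_oneop X"
  by (simp_all add: bendR_def bendL_def)

lemma cnt_rw[simp]: "count_one (rwR X a b rI k) = count_one X" "count_oneop (rwR X a b rI k) = count_oneop X"
  "count_one (rwL X a b lI k) = count_one X" "count_oneop (rwL X a b lI k) = count_oneop X"
  by (induction k arbitrary: X a b) auto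

lemma cnt_rewiring[simp]: "count_one (rewiring X n m lI rI) = count_one X" "count_oneop (rewiring X n m lI rI) = count_oneop X"
  by (simp_all add: rewiring_def Let_def)

lemma csort_rwR: "csort Y = Some (a,b) \<Longrightarrow> k \<le> b \<Longrightarrow> k \<le> length rI \<Longrightarrow>
  csort (rwR Y a b rI k) = Some (a + length (filter id (take k rI)), b - length (filter id (take k rI)))"
proof (induction k arbitrary: Y a b)
  case (Suc k)
  show ?case
  proof (cases "rI ! k")
    case True
    have "csort (bendR k a b Y) = Some (Suc a, b - 1)" using Suc.prems by (simp add: csort_bendR)
    then have "csort (rwR (bendR k a b Y) (Suc a) (b - 1) rI k) =
       Some (Suc a + length (filter id (take k rI)), b - 1 - length (filter id (take k rI)))"
      using Suc by (simp add: id_def)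
    moreover have "take (Suc k) rI = take k rI @ [rI ! k]" using Suc.prems by (simp add: take_Suc_conv_app_nth)
    ultimately show ?thesis using True by (simp add: id_def)
  next
    case False
    have "take (Suc k) rI = take k rI @ [rI ! k]" using Suc.prems by (simp add: take_Suc_conv_app_nth)
    then show ?thesis using False Suc by (simp add: id_def)
  qed
qed simp

lemma slice_bendR:
  assumes X: "csort X = Some (Suc a, b)" and Y: "csort Y = Some (a, b)" and s: "slice1 (den X) = den Y" and j: "j < b"
  shows "slice1 (den (bendR j (Suc a) b X)) = den (bendR j a b Y)"
proof (rule set_eqI, clarify)
  fix x y
  have sY: "\<And>u v. (u,v) \<in> den Y \<longleftrightarrow> (1#u, v) \<in> den X" using s by (metis mem_slice1)
  have "(x,y) \<in> slice1 (den (bendR j (Suc a) b X)) \<longleftrightarrow>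
     (\<exists>u v. (u,v) \<in> den X \<and> 1#x = u@[v!j] \<and> y = take j v @ drop (Suc j) v)"
    by (simp only: mem_slice1 mem_bendR[OF X j])
  also have "\<dots> \<longleftrightarrow> (\<exists>u v. (u,v) \<in> den Y \<and> x = u@[v!j] \<and> y = take j v @ drop (Suc j) v)"
  proof
    assume "\<exists>u v. (u,v) \<in> den X \<and> 1#x = u@[v!j] \<and> y = take j v @ drop (Suc j) v"
    then obtain u v where h: "(u,v) \<in> den X" "1#x = u@[v!j]" "y = take j v @ drop (Suc j) v" by blast
    have "length u = Suc a" using den_len[OF X h(1)] by simp
    then obtain u' where u: "u = 1 # u'" using h(2) by (cases u) auto
    then show "\<exists>u v. (u,v) \<in> den Y \<and> x = u@[v!j] \<and> y = take j v @ drop (Suc j) v"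
      using h sY by auto
  next
    assume "\<exists>u v. (u,v) \<in> den Y \<and> x = u@[v!j] \<and> y = take j v @ drop (Suc j) v"
    then obtain u v where h: "(u,v) \<in> den Y" "x = u@[v!j]" "y = take j v @ drop (Suc j) v" by blast
    then show "\<exists>u v. (u,v) \<in> den X \<and> 1#x = u@[v!j] \<and> y = take j v @ drop (Suc j) v"
      using sY by (intro exI[of _ "1#u"] exI[of _ v]) auto
  qed
  also have "\<dots> \<longleftrightarrow> (x,y) \<in> den (bendR j a b Y)" by (simp only: mem_bendR[OF Y j])
  finally show "(x,y) \<in> slice1 (den (bendR j (Suc a) b X)) \<longleftrightarrow> (x,y) \<in> den (bendR j a b Y)" .
qed

lemma slice_bendL:
  assumes X: "csort X = Some (Suc a, b)" and Y: "csort Y = Some (a, b)" and s: "slice1 (den X) = den Y" and i: "i < a"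
  shows "slice1 (den (bendL (Suc i) (Suc a) b X)) = den (bendL i a b Y)"
proof (rule set_eqI, clarify)
  fix x y
  have sY: "\<And>u v. (u,v) \<in> den Y \<longleftrightarrow> (1#u, v) \<in> den X" using s by (metis mem_slice1)
  have i': "Suc i < Suc a" using i by simp
  have "(x,y) \<in> slice1 (den (bendL (Suc i) (Suc a) b X)) \<longleftrightarrow>
     (\<exists>u v. (u,v) \<in> den X \<and> 1#x = take (Suc i) u @ drop (Suc (Suc i)) u \<and> y = v @ [u!Suc i])"
    by (simp only: mem_slice1 mem_bendL[OF X i'])
  also have "\<dots> \<longleftrightarrow> (\<exists>u v. (u,v) \<in> den Y \<and> x = take i u @ drop (Suc i) u \<and> y = v @ [u!i])"
  proof
    assume "\<exists>u v. (u,v) \<in> den X \<and> 1#x = take (Suc i) u @ drop (Suc (Suc i)) u \<and> y = v @ [u!Suc i]"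
    then obtain u v where h: "(u,v) \<in> den X" "1#x = take (Suc i) u @ drop (Suc (Suc i)) u" "y = v @ [u!Suc i]" by blast
    have "length u = Suc a" using den_len[OF X h(1)] by simp
    then obtain h0 u' where u: "u = h0 # u'" by (cases u) auto
    then have "h0 = 1" "x = take i u' @ drop (Suc i) u'" using h(2) by auto
    then show "\<exists>u v. (u,v) \<in> den Y \<and> x = take i u @ drop (Suc i) u \<and> y = v @ [u!i]"
      using h sY u by auto
  next
    assume "\<exists>u v. (u,v) \<in> den Y \<and> x = take i u @ drop (Suc i) u \<and> y = v @ [u!i]"
    then obtain u v where h: "(u,v) \<in> den Y" "x = take i u @ drop (Suc i) u" "y = v @ [u!i]" by blast
    then show "\<exists>u v. (u,v) \<in> den X \<and> 1#x = take (Suc i) u @ drop (Suc (Suc i)) u \<and> y = v @ [u!Suc i]"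
      using sY by (intro exI[of _ "1#u"] exI[of _ v]) auto
  qed
  also have "\<dots> \<longleftrightarrow> (x,y) \<in> den (bendL i a b Y)" by (simp only: mem_bendL[OF Y i])
  finally show "(x,y) \<in> slice1 (den (bendL (Suc i) (Suc a) b X)) \<longleftrightarrow> (x,y) \<in> den (bendL i a b Y)" .
qed

lemma slice_rwR:
  "csort X = Some (Suc a, b) \<Longrightarrow> csort Y = Some (a, b) \<Longrightarrow> slice1 (den X) = den Y \<Longrightarrow> k \<le> b \<Longrightarrow>
   slice1 (den (rwR X (Suc a) b rI k)) = den (rwR Y a b rI k)"
proof (induction k arbitrary: X Y a b)
  case (Suc k)
  show ?case
  proof (cases "rI ! k")
    case True
    have k: "k < b" using Suc.prems by simp
    have "slice1 (den (rwR (bendR k (Suc a) b X) (Suc (Suc a)) (b - 1) rI k)) = den (rwR (bendR k a b Y) (Suc a) (b - 1) rI k)"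
      by (rule Suc.IH) (use Suc.prems k in \<open>simp_all add: csort_bendR slice_bendR\<close>)
    then show ?thesis using True by simp
  next
    case False
    then show ?thesis using Suc by simp
  qed
qed simp

lemma slice_rwL:
  "csort X = Some (Suc a, b) \<Longrightarrow> csort Y = Some (a, b) \<Longrightarrow> slice1 (den X) = den Y \<Longrightarrow> k \<le> a \<Longrightarrow>
   \<exists>a' b'. csort (rwL Y a b lI k) = Some (a',b') \<and> csort (rwL X (Suc a) b (True#lI) (Suc k)) = Some (Suc a', b') \<and>
     slice1 (den (rwL X (Suc a) b (True#lI) (Suc k))) = den (rwL Y a b lI k)"
proof (induction k arbitrary: X Y a b)
  case 0
  then show ?case by simp
next
  case (Suc k)
  show ?case
  proof (cases "lI ! k")
    case True
    then show ?thesis using Suc by simp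
  next
    case False
    have k: "k < a" using Suc.prems by simp
    then obtain a0 where a0: "a = Suc a0" by (cases a) auto
    have X': "csort (bendL (Suc k) (Suc a) b X) = Some (Suc a0, Suc b)" using Suc.prems k a0 by (simp add: csort_bendL)
    have Y': "csort (bendL k a b Y) = Some (a0, Suc b)" using Suc.prems k a0 by (simp add: csort_bendL)
    have s': "slice1 (den (bendL (Suc k) (Suc a) b X)) = den (bendL k a b Y)"
      using slice_bendL[OF Suc.prems(1-3) k] .
    have "\<exists>a' b'. csort (rwL (bendL k a b Y) a0 (Suc b) lI k) = Some (a',b') \<and>
        csort (rwL (bendL (Suc k) (Suc a) b X) (Suc a0) (Suc b) (True#lI) (Suc k)) = Some (Suc a', b') \<and>
        slice1 (den (rwL (bendL (Suc k) (Suc a) b X) (Suc a0) (Suc b) (True#lI) (Suc k))) = den (rwL (bendL k a b Y) a0 (Suc b) lI k)"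
      by (rule Suc.IH[OF X' Y' s']) (use k a0 in simp)
    then show ?thesis using False a0 by simp
  qed
qed




lemma csort_CSeqI: "csort c = Some (a,k) \<Longrightarrow> csort d = Some (k,b) \<Longrightarrow> csort (CSeq c d) = Some (a,b)"
  by simp

lemma sf_idn: "idn n \<in> sfg aff"
  by (induction n) (auto intro: sfg.intros)

lemma sf_swap: "swap_at k a \<in> sfg aff"
  unfolding swap_at_def by (auto intro!: sfg.intros sf_idn)

lemma sf_moveR: "i + d < a \<Longrightarrow> moveR i d a \<in> sfg aff"
proof (induction d arbitrary: i)
  case 0 then show ?case by (simp add: sf_idn)
next
  case (Suc d)
  show ?case unfolding moveR.simps
    by (rule sfg.intros(11)[OF sf_swap Suc.IH csort_swap_at csort_moveR]) (use Suc.prems in simp_all)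
qed

lemma sf_noone: "e \<in> sfg False \<Longrightarrow> count_one e = 0 \<and> count_oneop e = 0"
  by (induction rule: sfg.induct) (auto simp: trc_def)

lemma sf_mono: "e \<in> sfg False \<Longrightarrow> e \<in> sfg True"
  by (induction rule: sfg.induct) (auto intro: sfg.intros)

lemma mem_CPar_Disc: "(x,y) \<in> den (CPar CDisc g) \<longleftrightarrow> (\<exists>p u. x = p#u \<and> (u,y) \<in> den g)"
proof
  assume "(x,y) \<in> den (CPar CDisc g)" then show "\<exists>p u. x = p#u \<and> (u,y) \<in> den g" by auto
next
  assume "\<exists>p u. x = p#u \<and> (u,y) \<in> den g"
  then obtain p u where h: "x = p#u" "(u,y) \<in> den g" by blast
  have "([p],[]) \<in> den CDisc" by simp
  then have "([p]@u, []@y) \<in> den (CPar CDisc g)" unfolding den.simps using h(2) by blast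
  then show "(x,y) \<in> den (CPar CDisc g)" using h by simp
qed

lemma mem_CPar_Copy: "(x,y) \<in> den (CPar CCopy (idn a)) \<longleftrightarrow> (\<exists>p u. x = p#u \<and> y = p#p#u \<and> length u = a)"
proof
  assume "(x,y) \<in> den (CPar CCopy (idn a))" then show "\<exists>p u. x = p#u \<and> y = p#p#u \<and> length u = a"
    by (auto simp: mem_idn)
next
  assume "\<exists>p u. x = p#u \<and> y = p#p#u \<and> length u = a"
  then obtain p u where h: "x = p#u" "y = p#p#u" "length u = a" by blast
  have "([p],[p,p]) \<in> den CCopy" by simp
  moreover have "(u,u) \<in> den (idn a)" using h by (simp add: mem_idn)
  ultimately have "([p]@u, [p,p]@u) \<in> den (CPar CCopy (idn a))" unfolding den.simps by blast
  then show "(x,y) \<in> den (CPar CCopy (idn a))" using h by simp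
qed

lemma lift_gen:
  assumes "g \<in> sfg False" "csort g = Some (a,b)"
  shows "\<exists>e'. e' \<in> sfg False \<and> csort e' = Some (Suc a, b) \<and> slice1 (den e') = den g"
proof (rule exI[of _ "CPar CDisc g"], intro conjI)
  show "CPar CDisc g \<in> sfg False" using assms by (auto intro: sfg.intros)
  show "csort (CPar CDisc g) = Some (Suc a, b)" using assms by simp
  show "slice1 (den (CPar CDisc g)) = den g"
  proof (rule set_eqI, clarify)
    fix u v show "(u,v) \<in> slice1 (den (CPar CDisc g)) \<longleftrightarrow> (u,v) \<in> den g"
      by (simp only: mem_slice1 mem_CPar_Disc) blast
  qed
qed

lemma lift:
  "e \<in> sfg aff \<Longrightarrow> csort e = Some (a,b) \<Longrightarrow>
    \<exists>e'. e' \<in> sfg False \<and> csort e' = Some (Suc a, b) \<and> slice1 (den e') = den e"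
proof (induction arbitrary: a b rule: sfg.induct)
  case 10
  show ?case
    apply (rule exI[of _ CId1])
    using 10 by (auto intro: sfg.intros simp: slice1_def)
next
  case (11 c d a0 b0 e0)
  have ab: "a = a0" "b = e0" using 11 by auto
  obtain c' where c': "c' \<in> sfg False" "csort c' = Some (Suc a0, b0)" "slice1 (den c') = den c" using 11 by blast
  obtain d' where d': "d' \<in> sfg False" "csort d' = Some (Suc b0, e0)" "slice1 (den d') = den d" using 11 by blast
  let ?e = "CSeq (CSeq (CPar CCopy (idn a0)) (CPar CId1 c')) d'"
  have s1: "csort (CPar CCopy (idn a0)) = Some (Suc a0, Suc (Suc a0))" by simp
  have s2: "csort (CPar CId1 c') = Some (Suc (Suc a0), Suc b0)" using c' by simp
  have s3: "csort (CSeq (CPar CCopy (idn a0)) (CPar CId1 c')) = Some (Suc a0, Suc b0)" by (rule csort_CSeqI[OF s1 s2])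
  have "?e \<in> sfg False"
    by (rule sfg.intros(11)[OF sfg.intros(11)[OF sfg.intros(12)[OF sfg.intros(1) sf_idn] sfg.intros(12)[OF sfg.intros(8) c'(1)] s1 s2] d'(1) s3 d'(2)])
  moreover have "csort ?e = Some (Suc a, b)" using csort_CSeqI[OF s3 d'(2)] ab by simp
  moreover have "slice1 (den ?e) = den (CSeq c d)"
  proof (rule set_eqI, clarify)
    fix u w
    have sc: "\<And>x y. (1#x, y) \<in> den c' \<longleftrightarrow> (x,y) \<in> den c" using c'(3) by (metis mem_slice1)
    have sd: "\<And>x y. (1#x, y) \<in> den d' \<longleftrightarrow> (x,y) \<in> den d" using d'(3) by (metis mem_slice1)
    have "(u,w) \<in> slice1 (den ?e) \<longleftrightarrow> (\<exists>v. length u = a0 \<and> (1#u, v) \<in> den c' \<and> (1#v, w) \<in> den d')"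
      unfolding mem_slice1 mem_CSeq mem_CPar_Copy mem_CPar_Id1 by blast
    also have "\<dots> \<longleftrightarrow> (\<exists>v. length u = a0 \<and> (u, v) \<in> den c \<and> (v, w) \<in> den d)" using sc sd by blast
    also have "\<dots> \<longleftrightarrow> (u,w) \<in> den (CSeq c d)" using den_len[OF 11(3)] by auto
    finally show "(u,w) \<in> slice1 (den ?e) \<longleftrightarrow> (u,w) \<in> den (CSeq c d)" .
  qed
  ultimately show ?case by blast
next
  case (12 c d)
  from 12(5) obtain a1 b1 a2 b2 where k: "csort c = Some (a1,b1)" "csort d = Some (a2,b2)"
     "a = a1 + a2" "b = b1 + b2"
    using csort_CPar_Some by blast
  obtain c' where c': "c' \<in> sfg False" "csort c' = Some (Suc a1, b1)" "slice1 (den c') = den c" using 12 k by blast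
  obtain d' where d': "d' \<in> sfg False" "csort d' = Some (Suc a2, b2)" "slice1 (den d') = den d" using 12 k by blast
  let ?M = "CPar CId1 (moveR 0 a1 (Suc (a1+a2)))"
  let ?e = "CSeq (CPar CCopy (idn (a1+a2))) (CSeq ?M (CPar c' d'))"
  have s1: "csort (CPar CCopy (idn (a1+a2))) = Some (Suc (a1+a2), Suc (Suc (a1+a2)))" by simp
  have s2: "csort ?M = Some (Suc (Suc (a1+a2)), Suc (Suc (a1+a2)))" by (simp add: csort_moveR)
  have s3: "csort (CPar c' d') = Some (Suc (Suc (a1+a2)), b1+b2)" using c' d' by simp
  have s4: "csort (CSeq ?M (CPar c' d')) = Some (Suc (Suc (a1+a2)), b1+b2)" by (rule csort_CSeqI[OF s2 s3])
  have mM: "?M \<in> sfg False" by (rule sfg.intros(12)[OF sfg.intros(8) sf_moveR]) simp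
  have "?e \<in> sfg False"
    by (rule sfg.intros(11)[OF sfg.intros(12)[OF sfg.intros(1) sf_idn] sfg.intros(11)[OF mM sfg.intros(12)[OF c'(1) d'(1)] s2 s3] s1 s4])
  moreover have "csort ?e = Some (Suc a, b)" using csort_CSeqI[OF s1 s4] k by simp
  moreover have "slice1 (den ?e) = den (CPar c d)"
  proof (rule set_eqI, clarify)
    fix u v
    have mv: "den (moveR 0 a1 (Suc (a1 + a2)) :: 'a circ) = gr (Suc (a1 + a2)) (mRf 0 a1)"
      by (rule den_moveR) simp
    have "(u,v) \<in> slice1 (den ?e) \<longleftrightarrow> length u = a1 + a2 \<and> (1 # mRf 0 a1 (1#u), v) \<in> den (CPar c' d')"
      unfolding mem_slice1 mem_CSeq mem_CPar_Copy mem_CPar_Id1 mv mem_gr by auto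
    also have "\<dots> \<longleftrightarrow> length u = a1 + a2 \<and> (1 # take a1 u @ 1 # drop a1 u, v) \<in> den (CPar c' d')"
    proof (cases "length u = a1 + a2")
      case True
      then have "mRf 0 a1 (1#u) = take a1 u @ 1 # drop a1 u"
        using mRf_eval[of "[]" 0 "take a1 u" a1 1 "drop a1 u"] by simp
      then show ?thesis by (simp only: )
    next
      case False
      then show ?thesis by blast
    qed
    also have "\<dots> \<longleftrightarrow> length u = a1 + a2 \<and> (take a1 u, take b1 v) \<in> den c \<and> (drop a1 u, drop b1 v) \<in> den d"
    proof (cases "length u = a1 + a2")
      case True
      have sc: "\<And>x y. (1#x, y) \<in> den c' \<longleftrightarrow> (x,y) \<in> den c" using c'(3) by (metis mem_slice1)
      have sd: "\<And>x y. (1#x, y) \<in> den d' \<longleftrightarrow> (x,y) \<in> den d" using d'(3) by (metis mem_slice1)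
      have t: "take (Suc a1) (1 # take a1 u @ 1 # drop a1 u) = 1 # take a1 u"
        "drop (Suc a1) (1 # take a1 u @ 1 # drop a1 u) = 1 # drop a1 u"
        using True by simp_all
      show ?thesis by (simp only: mem_CPar[OF c'(2) d'(2)] t sc sd)
    next
      case False
      then show ?thesis by blast
    qed
    also have "\<dots> \<longleftrightarrow> (u,v) \<in> den (CPar c d)"
    proof
      assume "(u,v) \<in> den (CPar c d)"
      then have h: "(take a1 u, take b1 v) \<in> den c" "(drop a1 u, drop b1 v) \<in> den d"
        unfolding mem_CPar[OF k(1,2)] by blast+
      have "length (take a1 u) = a1" "length (drop a1 u) = a2" using den_len[OF k(1) h(1)] den_len[OF k(2) h(2)] by blast+
      then have "length u = a1 + a2" by simp
      then show "length u = a1 + a2 \<and> (take a1 u, take b1 v) \<in> den c \<and> (drop a1 u, drop b1 v) \<in> den d"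
        using h by blast
    qed (simp only: mem_CPar[OF k(1,2)])
    finally show "(u,v) \<in> slice1 (den ?e) \<longleftrightarrow> (u,v) \<in> den (CPar c d)" .
  qed
  ultimately show ?case by blast
next
  case (13 c n m)
  have ab: "a = n" "b = m" using 13(4) csort_trc[OF 13(2)] by auto
  obtain c' where c': "c' \<in> sfg False" "csort c' = Some (Suc (Suc n), Suc m)" "slice1 (den c') = den c" using 13 by blast
  have "trc (Suc n) m c' \<in> sfg False" by (rule sfg.intros(13)[OF c'(1,2)])
  moreover have "csort (trc (Suc n) m c') = Some (Suc a, b)" using csort_trc[OF c'(2)] ab by simp
  moreover have "slice1 (den (trc (Suc n) m c')) = den (trc n m c)"
  proof (rule set_eqI, clarify)
    fix u w
    have sc: "\<And>x y. (1#x, y) \<in> den c' \<longleftrightarrow> (x,y) \<in> den c" using c'(3) by (metis mem_slice1)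
    show "(u,w) \<in> slice1 (den (trc (Suc n) m c')) \<longleftrightarrow> (u,w) \<in> den (trc n m c)"
      unfolding mem_slice1 mem_trc[OF c'(2)] mem_trc[OF 13(2)] using sc by simp
  qed
  ultimately show ?case by blast
qed (rule lift_gen; auto intro: sfg.intros)+




definition sfinv :: "('a::field poly fract list \<times> 'a poly fract list) set \<Rightarrow> nat \<Rightarrow> bool" where
  "sfinv R a \<longleftrightarrow> (\<forall>u. length u = a \<longrightarrow> (\<exists>v. (u,v) \<in> R)) \<and>
     (\<forall>u v v'. (u,v) \<in> R \<longrightarrow> (u,v') \<in> R \<longrightarrow> v = v') \<and>
     (\<forall>u v. (u,v) \<in> R \<longrightarrow> set u \<subseteq> Pr \<longrightarrow> set v \<subseteq> Pr)"

lemma sfinv_tot: "sfinv R a \<Longrightarrow> length u = a \<Longrightarrow> \<exists>v. (u,v) \<in> R"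
  unfolding sfinv_def by blast
lemma sfinv_sv: "sfinv R a \<Longrightarrow> (u,v) \<in> R \<Longrightarrow> (u,v') \<in> R \<Longrightarrow> v = v'"
  unfolding sfinv_def by blast
lemma sfinv_caus: "sfinv R a \<Longrightarrow> (u,v) \<in> R \<Longrightarrow> set u \<subseteq> Pr \<Longrightarrow> set v \<subseteq> Pr"
  unfolding sfinv_def by blast

lemma smul_rep0[simp]: "smul s (replicate n 0) = replicate n 0"
  by (induction n) auto

lemma vadd_rep0: "vadd u (replicate (length u) 0) = u"
  by (induction u) auto

lemma trc_inv:
  assumes c: "csort c = Some (Suc n, Suc m)" and inv: "sfinv (den c) (Suc n)" and lin: "linrel (den c)"
  shows "sfinv (den (trc n m c)) n"
proof -
  let ?D = "den c"
  have tot: "\<And>u. length u = Suc n \<Longrightarrow> \<exists>v. (u,v) \<in> ?D" using inv unfolding sfinv_def by blast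
  have sv: "\<And>u v v'. (u,v) \<in> ?D \<Longrightarrow> (u,v') \<in> ?D \<Longrightarrow> v = v'" using inv unfolding sfinv_def by blast
  have caus: "\<And>u v. (u,v) \<in> ?D \<Longrightarrow> set u \<subseteq> Pr \<Longrightarrow> set v \<subseteq> Pr" using inv unfolding sfinv_def by blast
  have split: "\<And>u v. (u,v) \<in> ?D \<Longrightarrow> \<exists>y t. v = y @ [t] \<and> length y = m"
  proof -
    fix u v assume "(u,v) \<in> ?D"
    then have "length v = Suc m" using den_len[OF c] by blast
    then show "\<exists>y t. v = y @ [t] \<and> length y = m" by (metis length_Suc_conv_rev)
  qed
  obtain v1 where "(replicate n 0 @ [1], v1) \<in> ?D" using tot[of "replicate n 0 @ [1]"] by auto
  then obtain y1 d where e1: "(replicate n 0 @ [1], y1 @ [d]) \<in> ?D" "length y1 = m" using split by blast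
  have "set (replicate n 0 @ [1]) \<subseteq> Pr" using Pr_0 Pr_1 by auto
  then have dP: "d \<in> Pr" using caus[OF e1(1)] by auto
  have nz: "1 - xvar * d \<noteq> 0" using Pr_unit(1)[OF dP] .
  have K: "\<And>u y0 g s. length u = n \<Longrightarrow> (u@[0], y0@[g]) \<in> ?D \<Longrightarrow> length y0 = m \<Longrightarrow>
      (u@[s], vadd y0 (smul s y1) @ [g + s*d]) \<in> ?D"
  proof -
    fix u y0 g s assume h: "length u = n" "(u@[0], y0@[g]) \<in> ?D" "length y0 = m"
    have "(smul s (replicate n 0 @ [1]), smul s (y1 @ [d])) \<in> ?D" using linrelD(2)[OF lin e1(1)] .
    then have "(replicate n 0 @ [s], smul s y1 @ [s*d]) \<in> ?D" by simp
    from linrelD(1)[OF lin h(2) this]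
    have "(vadd (u@[0]) (replicate n 0 @ [s]), vadd (y0@[g]) (smul s y1 @ [s*d])) \<in> ?D" .
    moreover have "vadd (u@[0]) (replicate n 0 @ [s]) = u @ [s]"
      using h(1) vadd_rep0[of u] by (simp add: vadd_append)
    moreover have "vadd (y0@[g]) (smul s y1 @ [s*d]) = vadd y0 (smul s y1) @ [g + s*d]"
      using h(3) e1(2) by (simp add: vadd_append)
    ultimately show "(u@[s], vadd y0 (smul s y1) @ [g + s*d]) \<in> ?D" by simp
  qed
  have base: "\<And>u. length u = n \<Longrightarrow> \<exists>y0 g. (u@[0], y0@[g]) \<in> ?D \<and> length y0 = m"
  proof -
    fix u :: "'a poly fract list" assume "length u = n"
    then obtain v where "(u@[0], v) \<in> ?D" using tot[of "u@[0]"] by auto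
    then show "\<exists>y0 g. (u@[0], y0@[g]) \<in> ?D \<and> length y0 = m" using split by blast
  qed
  have fix_eq: "\<And>u w q. (u@[q*xvar], w@[q]) \<in> ?D \<Longrightarrow> \<exists>y0 g. (u@[0], y0@[g]) \<in> ?D \<and> length y0 = m \<and>
       q = g / (1 - xvar*d) \<and> w = vadd y0 (smul (q*xvar) y1)"
  proof -
    fix u w q assume h: "(u@[q*xvar], w@[q]) \<in> ?D"
    have lu: "length u = n" using den_len[OF c h] by simp
    obtain y0 g where b: "(u@[0], y0@[g]) \<in> ?D" "length y0 = m" using base[OF lu] by blast
    have "(u@[q*xvar], vadd y0 (smul (q*xvar) y1) @ [g + q*xvar*d]) \<in> ?D" using K[OF lu b(1) b(2)] .
    from sv[OF h this] have e: "w = vadd y0 (smul (q*xvar) y1)" "q = g + q*xvar*d" by simp_all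
    then have "q * (1 - xvar*d) = g" by (simp add: algebra_simps)
    then have "q = g / (1 - xvar*d)" using nz by (simp add: field_simps)
    then show "\<exists>y0 g. (u@[0], y0@[g]) \<in> ?D \<and> length y0 = m \<and> q = g / (1 - xvar*d) \<and> w = vadd y0 (smul (q*xvar) y1)"
      using b e by blast
  qed
  show ?thesis unfolding sfinv_def
  proof (intro conjI allI impI)
    fix u :: "'a poly fract list" assume lu: "length u = n"
    obtain y0 g where b: "(u@[0], y0@[g]) \<in> ?D" "length y0 = m" using base[OF lu] by blast
    define t where "t = g / (1 - xvar*d)"
    have "g + t*xvar*d = t" unfolding t_def using nz by (simp add: field_simps)
    then have "(u@[t*xvar], vadd y0 (smul (t*xvar) y1) @ [t]) \<in> ?D" using K[OF lu b(1) b(2), of "t*xvar"] by simp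
    then show "\<exists>v. (u,v) \<in> den (trc n m c)" unfolding mem_trc[OF c] by blast
  next
    fix u v v' assume "(u,v) \<in> den (trc n m c)" "(u,v') \<in> den (trc n m c)"
    then obtain q q' where h: "(u@[q*xvar], v@[q]) \<in> ?D" "(u@[q'*xvar], v'@[q']) \<in> ?D" unfolding mem_trc[OF c] by blast
    obtain y0 g where a1: "(u@[0], y0@[g]) \<in> ?D" "q = g / (1 - xvar*d)" "v = vadd y0 (smul (q*xvar) y1)"
      using fix_eq[OF h(1)] by blast
    obtain y0' g' where a2: "(u@[0], y0'@[g']) \<in> ?D" "q' = g' / (1 - xvar*d)" "v' = vadd y0' (smul (q'*xvar) y1)"
      using fix_eq[OF h(2)] by blast
    have "y0 = y0'" "g = g'" using sv[OF a1(1) a2(1)] by simp_all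
    then show "v = v'" using a1 a2 by simp
  next
    fix u v assume h0: "(u,v) \<in> den (trc n m c)" and P: "set u \<subseteq> Pr"
    then obtain q where h: "(u@[q*xvar], v@[q]) \<in> ?D" unfolding mem_trc[OF c] by blast
    obtain y0 g where a1: "(u@[0], y0@[g]) \<in> ?D" "q = g / (1 - xvar*d)"
      using fix_eq[OF h] by blast
    have "set (u@[0]) \<subseteq> Pr" using P Pr_0 by auto
    then have "g \<in> Pr" using caus[OF a1(1)] by simp
    then have "q \<in> Pr" using a1(2) Pr_unit(2)[OF dP] by simp
    then have "set (u@[q*xvar]) \<subseteq> Pr" using P Pr_mult Pr_x by auto
    then show "set v \<subseteq> Pr" using caus[OF h] by simp
  qed
qed

lemma sf_inv: "e \<in> sfg aff \<Longrightarrow> \<not> aff \<Longrightarrow> csort e = Some (a,b) \<Longrightarrow> sfinv (den e) a"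
proof (induction arbitrary: a b rule: sfg.induct)
  case (11 c d a0 b0 e0)
  have ab: "a = a0" using 11(3,4,8) by simp
  have ic: "sfinv (den c) a0" using 11(5)[OF 11(7) 11(3)] .
  have id: "sfinv (den d) b0" using 11(6)[OF 11(7) 11(4)] .
  show ?case unfolding sfinv_def ab
  proof (intro conjI allI impI)
    fix u :: "'a poly fract list" assume "length u = a0"
    then obtain v where v: "(u,v) \<in> den c" using ic unfolding sfinv_def by blast
    then have "length v = b0" using den_len[OF 11(3)] by blast
    then obtain w where "(v,w) \<in> den d" using id unfolding sfinv_def by blast
    then show "\<exists>w. (u,w) \<in> den (CSeq c d)" using v by auto
  next
    fix u w w' assume "(u,w) \<in> den (CSeq c d)" "(u,w') \<in> den (CSeq c d)"
    then obtain v v' where "(u,v) \<in> den c" "(v,w) \<in> den d" "(u,v') \<in> den c" "(v',w') \<in> den d" by auto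
    then show "w = w'" using sfinv_sv[OF ic] sfinv_sv[OF id] by blast
  next
    fix u w assume "(u,w) \<in> den (CSeq c d)" "set u \<subseteq> Pr"
    then obtain v where "(u,v) \<in> den c" "(v,w) \<in> den d" "set u \<subseteq> Pr" by auto
    then show "set w \<subseteq> Pr" using sfinv_caus[OF ic] sfinv_caus[OF id] by blast
  qed
next
  case (12 c d)
  from 12(6) obtain a1 b1 a2 b2 where k: "csort c = Some (a1,b1)" "csort d = Some (a2,b2)"
     "a = a1 + a2" "b = b1 + b2"
    using csort_CPar_Some by blast
  have ic: "sfinv (den c) a1" using 12(3)[OF 12(5) k(1)] .
  have id: "sfinv (den d) a2" using 12(4)[OF 12(5) k(2)] .
  show ?case unfolding sfinv_def
  proof (intro conjI allI impI)
    fix u :: "'a poly fract list" assume lu: "length u = a"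
    have "length (take a1 u) = a1" "length (drop a1 u) = a2" using lu k by simp_all
    then obtain v1 v2 where v1: "(take a1 u, v1) \<in> den c" and v2: "(drop a1 u, v2) \<in> den d"
      using ic id unfolding sfinv_def by blast
    have "length v1 = b1" using den_len[OF k(1) v1] by simp
    then have "(u, v1@v2) \<in> den (CPar c d)" unfolding mem_CPar[OF k(1,2)] using v1 v2 by simp
    then show "\<exists>v. (u,v) \<in> den (CPar c d)" by blast
  next
    fix u v v' assume "(u,v) \<in> den (CPar c d)" "(u,v') \<in> den (CPar c d)"
    then have h: "(take a1 u, take b1 v) \<in> den c" "(drop a1 u, drop b1 v) \<in> den d"
      "(take a1 u, take b1 v') \<in> den c" "(drop a1 u, drop b1 v') \<in> den d"
      unfolding mem_CPar[OF k(1,2)] by blast+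
    have "take b1 v = take b1 v'" "drop b1 v = drop b1 v'" using sfinv_sv[OF ic] sfinv_sv[OF id] h by blast+
    then have "take b1 v @ drop b1 v = take b1 v' @ drop b1 v'" by simp
    then show "v = v'" by simp
  next
    fix u v assume "(u,v) \<in> den (CPar c d)" "set u \<subseteq> Pr"
    then have h: "(take a1 u, take b1 v) \<in> den c" "(drop a1 u, drop b1 v) \<in> den d" "set u \<subseteq> Pr"
      unfolding mem_CPar[OF k(1,2)] by blast+
    have "set (take a1 u) \<subseteq> Pr" by (rule subset_trans[OF set_take_subset h(3)])
    moreover have "set (drop a1 u) \<subseteq> Pr" by (rule subset_trans[OF set_drop_subset h(3)])
    ultimately have "set (take b1 v) \<subseteq> Pr" "set (drop b1 v) \<subseteq> Pr" using sfinv_caus[OF ic h(1)] sfinv_caus[OF id h(2)] by blast+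
    then have "set (take b1 v @ drop b1 v) \<subseteq> Pr" by (simp only: set_append Un_subset_iff)
    then show "set v \<subseteq> Pr" by simp
  qed
next
  case (13 c n m)
  have ab: "a = n" using 13(5) csort_trc[OF 13(2)] by auto
  have cF: "c \<in> sfg False" using 13(1) 13(4) by simp
  have lin: "linrel (den c)" using lin_den[OF conjunct1[OF sf_noone[OF cF]] conjunct2[OF sf_noone[OF cF]] 13(2)] .
  show ?case unfolding ab by (rule trc_inv[OF 13(2) 13(3)[OF 13(4) 13(2)] lin])
next
  case 1
  then show ?case unfolding sfinv_def by (auto simp: numeral_2_eq_2 length_Suc_conv Pr_mult Pr_add Pr_scal Pr_x Pr_0)
next
  case 2
  then show ?case unfolding sfinv_def by (auto simp: numeral_2_eq_2 length_Suc_conv Pr_mult Pr_add Pr_scal Pr_x Pr_0)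
next
  case 3
  then show ?case unfolding sfinv_def by (auto simp: numeral_2_eq_2 length_Suc_conv Pr_mult Pr_add Pr_scal Pr_x Pr_0)
next
  case 4
  then show ?case unfolding sfinv_def by (auto simp: numeral_2_eq_2 length_Suc_conv Pr_mult Pr_add Pr_scal Pr_x Pr_0)
next
  case 5
  then show ?case unfolding sfinv_def by (auto simp: numeral_2_eq_2 length_Suc_conv Pr_mult Pr_add Pr_scal Pr_x Pr_0)
next
  case 6
  then show ?case unfolding sfinv_def by (auto simp: numeral_2_eq_2 length_Suc_conv Pr_mult Pr_add Pr_scal Pr_x Pr_0)
next
  case 7
  then show ?case unfolding sfinv_def by (auto simp: numeral_2_eq_2 length_Suc_conv Pr_mult Pr_add Pr_scal Pr_x Pr_0)
next
  case 8
  then show ?case unfolding sfinv_def by (auto simp: numeral_2_eq_2 length_Suc_conv Pr_mult Pr_add Pr_scal Pr_x Pr_0)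
next
  case 9
  then show ?case unfolding sfinv_def by (auto simp: numeral_2_eq_2 length_Suc_conv Pr_mult Pr_add Pr_scal Pr_x Pr_0)
next
  case 10
  then show ?case unfolding sfinv_def by (auto simp: numeral_2_eq_2 length_Suc_conv Pr_mult Pr_add Pr_scal Pr_x Pr_0)
qed


lemma asf_ne: "e \<in> sfg True \<Longrightarrow> csort e = Some (a,b) \<Longrightarrow> \<exists>x. x \<in> den e"
proof -
  assume e: "e \<in> sfg True" "csort e = Some (a,b)"
  obtain e' where e': "e' \<in> sfg False" "csort e' = Some (Suc a, b)" "slice1 (den e') = den e"
    using lift[OF e] by blast
  have inv: "sfinv (den e') (Suc a)" using sf_inv[OF e'(1) _ e'(2)] by simp
  have "length (1 # replicate a 0 :: 'a poly fract list) = Suc a" by simp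
  then obtain v where "(1 # replicate a 0, v) \<in> den e'" using sfinv_tot[OF inv] by blast
  then have "(replicate a 0, v) \<in> slice1 (den e')" by simp
  then show ?thesis using e'(3) by blast
qed

lemma rewiring_rel:
  assumes c: "csort c = Some (n,m)" and eq: "circ_equiv c' c" and o1: "count_one c' = 1"
    and lI: "length lI = n" and rI: "length rI = m"
  shows "\<exists>k l. csort (rewiring c n m lI rI) = Some (k,l) \<and>
     csort (rewiring (hatc c') (Suc n) m (True#lI) rI) = Some (Suc k, l) \<and>
     slice1 (den (rewiring (hatc c') (Suc n) m (True#lI) rI)) = den (rewiring c n m lI rI)"
proof -
  have c': "csort c' = Some (n,m)" "den c' = den c" using eq c unfolding circ_equiv_def by auto
  have h: "csort (hatc c') = Some (Suc n, m)" "slice1 (den (hatc c')) = den c'"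
    using hatc_props[OF _ c'(1)] o1 by auto
  define r where "r = length (filter id rI)"
  have tk: "take m rI = rI" using rI by simp
  have Y1: "csort (rwR c' n m rI m) = Some (n + r, m - r)"
    using csort_rwR[OF c'(1), of m rI] rI tk unfolding r_def by simp
  have X1: "csort (rwR (hatc c') (Suc n) m rI m) = Some (Suc (n + r), m - r)"
    using csort_rwR[OF h(1), of m rI] rI tk unfolding r_def by simp
  have s1: "slice1 (den (rwR (hatc c') (Suc n) m rI m)) = den (rwR c' n m rI m)"
    using slice_rwR[OF h(1) c'(1) h(2)] by simp
  obtain a' b' where L: "csort (rwL (rwR c' n m rI m) (n + r) (m - r) lI n) = Some (a',b')"
    "csort (rwL (rwR (hatc c') (Suc n) m rI m) (Suc (n + r)) (m - r) (True#lI) (Suc n)) = Some (Suc a', b')"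
    "slice1 (den (rwL (rwR (hatc c') (Suc n) m rI m) (Suc (n + r)) (m - r) (True#lI) (Suc n)))
       = den (rwL (rwR c' n m rI m) (n + r) (m - r) lI n)"
    using slice_rwL[OF X1 Y1 s1, of n lI] by auto
  have R1: "rewiring (hatc c') (Suc n) m (True#lI) rI = rwL (rwR (hatc c') (Suc n) m rI m) (Suc (n + r)) (m - r) (True#lI) (Suc n)"
    unfolding rewiring_def Let_def r_def by simp
  have R2: "rewiring c' n m lI rI = rwL (rwR c' n m rI m) (n + r) (m - r) lI n"
    unfolding rewiring_def Let_def r_def by simp
  have cg: "csort (rewiring c' n m lI rI) = csort (rewiring c n m lI rI) \<and> den (rewiring c' n m lI rI) = den (rewiring c n m lI rI)"
    using cong_rewiring[OF c'(1)[unfolded c[symmetric]] c'(2)] .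
  show ?thesis using L R1 R2 cg by metis
qed

theorem theorem6:
  fixes c c' :: "'k::field circ" and n m :: nat
  assumes "csort c = Some (n, m)"
    and "circ_equiv c' c"
    and "count_one c' = 1"
    and "count_oneop c' = 0"
  shows "realisable c n m \<longleftrightarrow> is_input_port (hatc c') (Suc n) m (LeftP 0)"
proof
  assume "realisable c n m"
  then obtain lI rI e where l: "length lI = n" "length rI = m" and e: "e \<in> sfg True"
    and eq: "circ_equiv (rewiring c n m lI rI) e"
    unfolding realisable_def by blast
  obtain k l where kl: "csort (rewiring c n m lI rI) = Some (k,l)"
     "csort (rewiring (hatc c') (Suc n) m (True#lI) rI) = Some (Suc k, l)"
     "slice1 (den (rewiring (hatc c') (Suc n) m (True#lI) rI)) = den (rewiring c n m lI rI)"
    using rewiring_rel[OF assms(1-3) l] by blast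
  let ?R = "rewiring (hatc c') (Suc n) m (True#lI) rI"
  have ce: "csort e = Some (k,l)" "den e = den (rewiring c n m lI rI)" using eq kl unfolding circ_equiv_def by auto
  obtain e' where e': "e' \<in> sfg False" "csort e' = Some (Suc k, l)" "slice1 (den e') = den e"
    using lift[OF e ce(1)] by blast
  have c'ok: "csort c' = Some (n,m)" using assms(1,2) unfolding circ_equiv_def by simp
  have cntR: "count_one ?R = 0" "count_oneop ?R = 0"
    using cnt_hatc[of c'] cntop_hatc[of c'] assms(3,4) by simp_all
  have linR: "linrel (den ?R)" using lin_den[OF cntR kl(2)] .
  have line': "linrel (den e')" using lin_den[OF conjunct1[OF sf_noone[OF e'(1)]] conjunct2[OF sf_noone[OF e'(1)]] e'(2)] .
  obtain x0 where x0: "x0 \<in> den e" using asf_ne[OF e ce(1)] by blast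
  obtain u0 v0 where uv0: "(u0,v0) \<in> den e" using x0 by (cases x0) auto
  have ss: "slice1 (den e') = slice1 (den ?R)" using e'(3) ce(2) kl(3) by simp
  have "den e' \<subseteq> den ?R"
    by (rule lin_sub[OF line' linR _ ss, of k l u0 v0]) (use den_len[OF e'(2)] uv0 e'(3) in auto)
  moreover have "den ?R \<subseteq> den e'"
    by (rule lin_sub[OF linR line' _ ss[symmetric], of k l u0 v0]) (use den_len[OF kl(2)] uv0 e'(3) ss in auto)
  ultimately have "den ?R = den e'" by blast
  then have "circ_equiv ?R e'" unfolding circ_equiv_def using kl(2) e'(2) by simp
  then show "is_input_port (hatc c') (Suc n) m (LeftP 0)"
    unfolding is_input_port_def using l e'(1)
    by (intro exI[of _ "True#lI"] exI[of _ rI]) auto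
next
  assume "is_input_port (hatc c') (Suc n) m (LeftP 0)"
  then obtain lI0 rI e where l: "length lI0 = Suc n" "length rI = m" "lI0 ! 0" and e: "e \<in> sfg False"
    and eq: "circ_equiv (rewiring (hatc c') (Suc n) m lI0 rI) e"
    unfolding is_input_port_def by auto
  obtain lI where lI0: "lI0 = True # lI" and lI: "length lI = n" using l by (cases lI0) auto
  obtain k l where kl: "csort (rewiring c n m lI rI) = Some (k,l)"
     "csort (rewiring (hatc c') (Suc n) m (True#lI) rI) = Some (Suc k, l)"
     "slice1 (den (rewiring (hatc c') (Suc n) m (True#lI) rI)) = den (rewiring c n m lI rI)"
    using rewiring_rel[OF assms(1-3) lI l(2)] by blast
  have ce: "csort e = Some (Suc k, l)" "den e = den (rewiring (hatc c') (Suc n) m (True#lI) rI)"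
    using eq kl lI0 unfolding circ_equiv_def by auto
  let ?e2 = "CSeq (CPar COne (idn k)) e"
  have s0: "csort (CPar COne (idn k)) = Some (k, Suc k)" by simp
  have "CPar COne (idn k) \<in> sfg True" by (intro sfg.intros sf_idn) simp
  then have e2: "?e2 \<in> sfg True" by (rule sfg.intros(11)[OF _ sf_mono[OF e] s0 ce(1)])
  have cs2: "csort ?e2 = Some (k,l)" using csort_CSeqI[OF s0 ce(1)] .
  have "den ?e2 = slice1 (den e)"
  proof (rule set_eqI, clarify)
    fix u w
    have "(u,w) \<in> den ?e2 \<longleftrightarrow> (\<exists>x. (u,x) \<in> den (CPar COne (idn k)) \<and> (x,w) \<in> den e)" by (simp only: mem_CSeq)
    also have "\<dots> \<longleftrightarrow> length u = k \<and> (1#u, w) \<in> den e"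
    proof
      assume "\<exists>x. (u,x) \<in> den (CPar COne (idn k)) \<and> (x,w) \<in> den e"
      then obtain x where "(u,x) \<in> den (CPar COne (idn k))" "(x,w) \<in> den e" by blast
      then show "length u = k \<and> (1#u, w) \<in> den e" by (auto simp: mem_idn)
    next
      assume h: "length u = k \<and> (1#u, w) \<in> den e"
      have "([],[1]) \<in> den (COne :: 'k circ)" by simp
      moreover have "(u,u) \<in> den (idn k :: 'k circ)" using h by (simp add: mem_idn)
      ultimately have "([]@u, [1]@u) \<in> den (CPar COne (idn k))" unfolding den.simps by blast
      then show "\<exists>x. (u,x) \<in> den (CPar COne (idn k)) \<and> (x,w) \<in> den e" using h by auto
    qed
    also have "\<dots> \<longleftrightarrow> (u,w) \<in> slice1 (den e)" using den_len[OF ce(1), of "1#u" w] by auto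
    finally show "(u,w) \<in> den ?e2 \<longleftrightarrow> (u,w) \<in> slice1 (den e)" .
  qed
  then have "den ?e2 = den (rewiring c n m lI rI)" using ce(2) kl(3) by simp
  then have "circ_equiv (rewiring c n m lI rI) ?e2" unfolding circ_equiv_def using kl(1) cs2 by simp
  then show "realisable c n m" unfolding realisable_def using lI l(2) e2 by blast
qed


end
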